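(* Let $A_L>0$ be the probability that the typical UE associates with a LoS ABS. For $r\ge h$, $$\mathbb{P}\big(R_{L,0}\in dr,\ R_{T,0}>R_B,\ \text{UE associates with a LoS ABS}\big)=A_L f_{\hat R_{L,0},1}(r)\,dr,$$ $$\mathbb{P}\big(R_{L,0}\in dr,\ R_{T,0}\le R_B,\ \text{UE associates with a LoS ABS}\big)=A_L f_{\hat R_{L,0},2}(r)\,dr,$$ where $$f_{\hat R_{L,0},1}(r)=\begin{cases}\frac{f_{R_{L,0}}(r)}{A_L}(1-Q_T), & h\le r\le l_{L,h},\\ \frac{f_{R_{L,0}}(r)}{A_L}(1-Q_T)\exp\Big(-2\pi\lambda_A\int_0^{\sqrt{\tau_{N|L}(r)^2-h^2}}xP_N(x)dx\Big), & r>l_{L,h},\end{cases}$$ and $f_{\hat R_{L,0},2}(r)=0$ for $r>l_{L,T}$, while for $h\le r\le l_{L,T}$: if $l_{L,h}>l_{L,T}$, $$f_{\hat R_{L,0},2}(r)=\frac{f_{R_{L,0}}(r)}{A_L}\big[\exp(-\pi\lambda_T\tau_{T|L}(r)^2)-(1-Q_T)\big];$$ if $l_{L,T}\ge l_{L,h}$, then $f_{\hat R_{L,0},2}(r)$ is given by the same expression for $h\le r\le l_{L,h}$, and for $l_{L,h}<r\le l_{L,T}$, $$f_{\hat R_{L,0},2}(r)=\frac{f_{R_{L,0}}(r)}{A_L}\big[\exp(-\pi\lambda_T\tau_{T|L}(r)^2)-(1-Q_T)\big]\exp\Big(-2\pi\lambda_A\int_0^{\sqrt{\tau_{N|L}(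r)^2-h^2}}xP_N(x)dx\Big).$$
   Context: The typical user (UE) is at the origin of the ground plane $\mathbb{R}^2$. Terrestrial base stations (TBSs) lie on the ground at the points of a homogeneous Poisson point process (HPPP) $\Phi_T$ of intensity $\lambda_T>0$. Aerial base stations (ABSs) all hover at height $h>0$; their horizontal positions form an HPPP $\Phi_A$ of intensity $\lambda_A>0$, independent of $\Phi_T$. Each ABS whose horizontal distance to the origin is $x$ is, independently of everything else, line-of-sight (LoS) with probability $P_L(x)$ and non-line-of-sight (NLoS) with probability $P_N(x)=1-P_L(x)$, where $P_L:[0,\infty)\to[0,1]$ is a given measurable function. $R_{L,0}$ (resp. $R_{N,0}$) denotes the Euclidean 3D distance $\sqrt{x^2+h^2}$ from the origin to the nearest LoS (resp. NLoS) ABS, and $R_{T,0}$ the distance from the origin to the nearest TBS. Fix $R_B>0$, exponents $\alpha_T,\alpha_L,\alpha_N>0$ and constants $\eta_T,\eta_L,\eta_N>0$. Association rule: the UE associates with the nearest TBS, the nearest LoS ABS, or the nearest NLoS ABS, whichever gives the largest of $P_{r,T}=\eta_T R_{T,0}^{-\alpha_T}\mathbf 1\{R_{T,0}\le R_B\}$, $P_{r,L}=\eta_L R_{L,0}^{-\alpha_L}$, $P_{r,N}=\eta_N R_{N,0}^{-\alpha_N}$. $Q_T=1-\exp(-\pi\lambda_T R_B^2)$. $f_{R_{L,0}}(r)=2\pi\lambda_A r P_L(\sqrt{r^2-h^2})\exp(-2\pi\lambda_A\int_0^{\sqrt{r^2-h^2}}xP_L(x)dx)$ for $r\ge h$. Define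 $l_{L,h}=(\eta_L/\eta_N)^{1/\alpha_L}h^{\alpha_N/\alpha_L}$, $l_{L,T}=(\eta_L/\eta_T)^{1/\alpha_L}R_B^{\alpha_T/\alpha_L}$, $\tau_{N|L}(r)=\max\{h,(\eta_N/\eta_L)^{1/\alpha_N}r^{\alpha_L/\alpha_N}\}$, $\tau_{T|L}(r)=(\eta_T/\eta_L)^{1/\alpha_T}r^{\alpha_L/\alpha_T}$. *)

theory Defs
  imports "HOL-Probability.Probability"
begin

definition ppp :: "'a measure \<Rightarrow> ('a \<Rightarrow> (real \<times> real) set) \<Rightarrow> (real \<times> real \<Rightarrow> real) \<Rightarrow> bool" where
  "ppp M \<Phi> \<rho> \<longleftrightarrow>
     (\<forall>\<omega>\<in>space M. \<forall>B. bounded B \<longrightarrow> finite (\<Phi> \<omega> \<inter> B)) \<and>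
     (\<forall>B\<in>sets borel. bounded B \<longrightarrow>
        (\<lambda>\<omega>. card (\<Phi> \<omega> \<inter> B)) \<in> measurable M (count_space UNIV) \<and>
        (\<forall>k. measure M {\<omega>\<in>space M. card (\<Phi> \<omega> \<inter> B) = k}
              = exp (- (LINT p:B|lborel. \<rho> p)) * (LINT p:B|lborel. \<rho> p) ^ k / fact k)) \<and>
     (\<forall>(n::nat) B. (\<forall>j<n. B j \<in> sets borel \<and> bounded (B j)) \<longrightarrow> disjoint_family_on B {..<n} \<longrightarrow>
        prob_space.indep_vars M (\<lambda>_. count_space UNIV) (\<lambda>j \<omega>. card (\<Phi> \<omega> \<inter> B j)) {..<n})"

definition indep_pps :: "'a measure \<Rightarrow> (nat \<Rightarrow> 'a \<Rightarrow> (real \<times> real) set) \<Rightarrow> nat set \<Rightarrow> bool" where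
  "indep_pps M \<Phi>s I \<longleftrightarrow>
     (\<forall>(n::nat) B. (\<forall>j<n. B j \<in> sets borel \<and> bounded (B j)) \<longrightarrow>
        prob_space.indep_vars M (\<lambda>_. PiM {..<n} (\<lambda>_. count_space UNIV))
          (\<lambda>i \<omega>. \<lambda>j\<in>{..<n}. card (\<Phi>s i \<omega> \<inter> B j)) I)"

definition nearest :: "(real \<times> real) set \<Rightarrow> real" where
  "nearest S = Inf (norm ` S)"


text \<open>3D distance from the origin to the nearest ABS (height h) of a horizontal position set.\<close>

definition dist3 :: "real \<Rightarrow> (real \<times> real) set \<Rightarrow> real" where
  "dist3 h S = sqrt ((nearest S)\<^sup>2 + h\<^sup>2)"

definition rx_T :: "real \<Rightarrow> real \<Rightarrow> real \<Rightarrow> (real \<times> real) set \<Rightarrow> real" where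
  "rx_T \<eta> \<alpha> RB S = (if S \<noteq> {} \<and> nearest S \<le> RB then \<eta> * nearest S powr (- \<alpha>) else 0)"

definition rx_A :: "real \<Rightarrow> real \<Rightarrow> real \<Rightarrow> (real \<times> real) set \<Rightarrow> real" where
  "rx_A \<eta> \<alpha> h S = (if S \<noteq> {} then \<eta> * dist3 h S powr (- \<alpha>) else 0)"

text \<open>The UE associates with the nearest LoS ABS (ties, which have probability zero,
  are resolved in favour of the LoS ABS).\<close>

definition assoc_LoS ::
  "real \<Rightarrow> real \<Rightarrow> real \<Rightarrow> real \<Rightarrow> real \<Rightarrow> real \<Rightarrow> real \<Rightarrow> real \<Rightarrow>
   (real \<times> real) set \<Rightarrow> (real \<times> real) set \<Rightarrow> (real \<times> real) set \<Rightarrow> bool" where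
  "assoc_LoS h RB \<alpha>T \<alpha>L \<alpha>N \<eta>T \<eta>L \<eta>N ST SL SN \<longleftrightarrow>
     SL \<noteq> {} \<and> rx_A \<eta>L \<alpha>L h SL \<ge> rx_T \<eta>T \<alpha>T RB ST \<and> rx_A \<eta>L \<alpha>L h SL \<ge> rx_A \<eta>N \<alpha>N h SN"

definition f_RL0 :: "real \<Rightarrow> real \<Rightarrow> (real \<Rightarrow> real) \<Rightarrow> real \<Rightarrow> real" where
  "f_RL0 lamA h P_L r = 2 * pi * lamA * r * P_L (sqrt (r\<^sup>2 - h\<^sup>2))
       * exp (- 2 * pi * lamA * (LINT x:{0..sqrt (r\<^sup>2 - h\<^sup>2)}|lborel. x * P_L x))"

end

theory Submission
  imports Defs
begin


definition zr :: "(real \<times> real) set \<Rightarrow> real" where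
  "zr S = (if S = {} then -1 else nearest S)"

definition lfin :: "(real \<times> real) set \<Rightarrow> bool" where
  "lfin S \<longleftrightarrow> (\<forall>B. bounded B \<longrightarrow> finite (S \<inter> B))"

lemma bdd_below_norm: "bdd_below (norm ` (S::(real\<times>real) set))"
  by (rule bdd_belowI[of _ 0]) auto

lemma nearest_ge0: "S \<noteq> {} \<Longrightarrow> nearest S \<ge> 0"
  unfolding nearest_def by (rule cInf_greatest) auto

lemma nearest_le: "p \<in> S \<Longrightarrow> nearest S \<le> norm p"
  unfolding nearest_def by (rule cInf_lower) (auto simp: bdd_below_norm)

lemma nearest_attained:
  assumes "lfin S" "S \<noteq> {}"
  shows "\<exists>p\<in>S. norm p = nearest S"
proof -
  obtain p0 where p0: "p0 \<in> S" using assms by auto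
  let ?F = "S \<inter> cball 0 (norm p0)"
  have fin: "finite ?F" using assms(1) unfolding lfin_def by auto
  have ne: "?F \<noteq> {}" using p0 by auto
  define m where "m = Min (norm ` ?F)"
  have "m \<in> norm ` ?F" unfolding m_def using fin ne by (intro Min_in) auto
  then obtain q where q: "q \<in> ?F" "norm q = m" by auto
  have "nearest S \<ge> m"
    unfolding nearest_def
  proof (rule cInf_greatest)
    show "norm ` S \<noteq> {}" using assms by auto
    fix x assume "x \<in> norm ` S"
    then obtain p where p: "p \<in> S" "x = norm p" by auto
    show "m \<le> x"
    proof (cases "norm p \<le> norm p0")
      case True
      then have "p \<in> ?F" using p by auto
      then show ?thesis unfolding m_def p using fin by auto
    next
      case False
      have "p0 \<in> ?F" using p0 by auto
      then have "m \<le> norm p0" unfolding m_def using fin by auto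
      then show ?thesis using False p by auto
    qed
  qed
  moreover have "nearest S \<le> m" using nearest_le[of q S] q by auto
  ultimately show ?thesis using q by auto
qed

lemma zr_cball:
  assumes "lfin S" "0 \<le> c"
  shows "(0 \<le> zr S \<and> zr S \<le> c) \<longleftrightarrow> S \<inter> cball 0 c \<noteq> {}"
proof
  assume a: "0 \<le> zr S \<and> zr S \<le> c"
  then have "S \<noteq> {}" by (auto simp: zr_def)
  then obtain p where "p \<in> S" "norm p = nearest S" using nearest_attained assms by blast
  then show "S \<inter> cball 0 c \<noteq> {}" using a \<open>S \<noteq> {}\<close> by (auto simp: zr_def)
next
  assume "S \<inter> cball 0 c \<noteq> {}"
  then obtain p where "p \<in> S" "norm p \<le> c" by auto
  then show "0 \<le> zr S \<and> zr S \<le> c" using nearest_le[of p S] nearest_ge0[of S]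
    by (auto simp: zr_def)
qed

lemma zr_ball:
  shows "(0 \<le> zr S \<and> zr S < a) \<longleftrightarrow> S \<inter> ball 0 a \<noteq> {}"
proof
  assume a: "0 \<le> zr S \<and> zr S < a"
  then have ne: "S \<noteq> {}" by (auto simp: zr_def)
  then have "Inf (norm ` S) < a" using a by (auto simp: zr_def nearest_def)
  then obtain x where "x \<in> norm ` S" "x < a"
    using cInf_less_iff[of "norm ` S" a] ne bdd_below_norm by auto
  then show "S \<inter> ball 0 a \<noteq> {}" by auto
next
  assume "S \<inter> ball 0 a \<noteq> {}"
  then obtain p where "p \<in> S" "norm p < a" by auto
  then show "0 \<le> zr S \<and> zr S < a" using nearest_le[of p S] nearest_ge0[of S]
    by (auto simp: zr_def)
qed

lemma zr_cases: "zr S = -1 \<or> zr S \<ge> 0"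
  using nearest_ge0[of S] by (auto simp: zr_def)

lemma emeasure_cball2: "r \<ge> 0 \<Longrightarrow> emeasure lborel (cball (0::real\<times>real) r) = ennreal (pi * r^2)"
  using emeasure_cball[of r "0::real\<times>real"] by (simp add: unit_ball_vol_2 mult.commute power2_eq_square)

lemma sphere_null2: "sphere (0::real\<times>real) r \<in> null_sets lborel"
  using negligible_sphere[of "0::real\<times>real" r]
  by (auto simp: null_sets_completion_iff negligible_iff_null_sets negligible_convex_frontier)

lemma nn_integral_2pix:
  assumes "0 \<le> a" "a \<le> b"
  shows "(\<integral>\<^sup>+x. ennreal (2*pi*x) * indicator {a..b} x \<partial>lborel) = ennreal (pi*b^2 - pi*a^2)"
proof -
  have "(\<integral>\<^sup>+x\<in>{a..b}. ennreal (2*pi*x) \<partial>lborel) = ennreal (pi*b^2 - pi*a^2)"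
  proof (rule nn_integral_FTC_Icc[where F="\<lambda>x. pi*x^2"])
    fix x assume "x \<in> {a..b}"
    then have "0 \<le> x" using assms by auto
    then show "0 \<le> 2*pi*x" by simp
  qed (auto intro!: derivative_eq_intros simp: assms)
  then show ?thesis by (simp add: mult.commute)
qed

lemma emeasure_density_ind:
  assumes [measurable]: "C \<in> sets M" "B \<in> sets M"
  shows "emeasure (density M (indicator C)) B = emeasure M (C \<inter> B)"
proof -
  have "emeasure (density M (indicator C)) B = (\<integral>\<^sup>+x. indicator C x * indicator B x \<partial>M)"
    by (rule emeasure_density) auto
  also have "\<dots> = (\<integral>\<^sup>+x. indicator (C \<inter> B) x \<partial>M)"
    by (intro nn_integral_cong) (simp split: split_indicator)
  also have "\<dots> = emeasure M (C \<inter> B)" by simp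
  finally show ?thesis .
qed

lemma distr_norm_cball:
  assumes a: "a \<ge> 0"
  shows "distr (density lborel (indicator (cball (0::real\<times>real) a))) borel norm
        = density lborel (\<lambda>x. ennreal (2*pi*x) * indicator {0..a} x)"
proof (rule measure_eqI_lessThan)
  show "sets (distr (density lborel (indicator (cball (0::real\<times>real) a))) borel norm) = sets borel" by simp
  show "sets (density lborel (\<lambda>x. ennreal (2*pi*x) * indicator {0..a} x)) = sets borel" by simp
  have L: "emeasure (distr (density lborel (indicator (cball (0::real\<times>real) a))) borel norm) {c<..}
        = emeasure lborel (cball (0::real\<times>real) a \<inter> {p. c < norm p})" for c
  proof -
    have "emeasure (distr (density lborel (indicator (cball (0::real\<times>real) a))) borel norm) {c<..}
       = emeasure (density lborel (indicator (cball (0::real\<times>real) a))) (norm -` {c<..} \<inter> space (density lborel (indicator (cball (0::real\<times>real) a))))"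
      by (rule emeasure_distr) auto
    also have "\<dots> = emeasure (density lborel (indicator (cball (0::real\<times>real) a))) {p. c < norm p}"
      by (simp add: vimage_def)
    also have "\<dots> = emeasure lborel (cball (0::real\<times>real) a \<inter> {p. c < norm p})"
    proof (rule emeasure_density_ind)
      show "{p::real\<times>real. c < norm p} \<in> sets lborel" by simp
    qed simp
    finally show ?thesis .
  qed
  have R: "emeasure (density lborel (\<lambda>x. ennreal (2*pi*x) * indicator {0..a} x)) {c<..}
       = ennreal (pi*a^2 - pi*(max 0 (min c a))^2)" for c
  proof -
    have "emeasure (density lborel (\<lambda>x. ennreal (2*pi*x) * indicator {0..a} x)) {c<..}
       = (\<integral>\<^sup>+x. ennreal (2*pi*x) * indicator {0..a} x * indicator {c<..} x \<partial>lborel)"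
      by (subst emeasure_density) auto
    also have "\<dots> = (\<integral>\<^sup>+x. ennreal (2*pi*x) * indicator {max 0 (min c a)..a} x \<partial>lborel)"
    proof (intro nn_integral_cong_AE)
      have "AE x in lborel. x \<noteq> c \<and> x \<noteq> a"
        using AE_lborel_singleton[of c] AE_lborel_singleton[of a] by (simp add: AE_conj_iff)
      then show "AE x in lborel. ennreal (2*pi*x) * indicator {0..a} x * indicator {c<..} x = ennreal (2*pi*x) * indicator {max 0 (min c a)..a} x"
        by (rule eventually_mono) (auto split: split_indicator)
    qed
    also have "\<dots> = ennreal (pi*a^2 - pi*(max 0 (min c a))^2)"
      using a by (intro nn_integral_2pix) auto
    finally show ?thesis .
  qed
  fix c :: real
  show "emeasure (distr (density lborel (indicator (cball (0::real\<times>real) a))) borel norm) {c<..} < \<infinity>"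
    unfolding L by (rule le_less_trans[OF emeasure_mono[of _ "cball 0 a"]]) 
       (auto simp: emeasure_cball2 a)
  show "emeasure (distr (density lborel (indicator (cball (0::real\<times>real) a))) borel norm) {c<..}
      = emeasure (density lborel (\<lambda>x. ennreal (2*pi*x) * indicator {0..a} x)) {c<..}"
    unfolding L R
  proof (cases "c < 0")
    case True
    have "c < norm p" for p :: "real\<times>real" using True norm_ge_zero[of p] by linarith
    then have "cball (0::real\<times>real) a \<inter> {p. c < norm p} = cball (0::real\<times>real) a" by blast
    then show "emeasure lborel (cball (0::real\<times>real) a \<inter> {p. c < norm p}) = ennreal (pi*a^2 - pi*(max 0 (min c a))^2)"
      using True a by (simp add: emeasure_cball2)
  next
    case False
    let ?m = "min c a"
    have eq: "cball (0::real\<times>real) a \<inter> {p. c < norm p} = cball (0::real\<times>real) a - cball 0 ?m"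
      by auto
    have "emeasure lborel (cball (0::real\<times>real) a - cball 0 ?m) = emeasure lborel (cball (0::real\<times>real) a) - emeasure lborel (cball (0::real\<times>real) ?m)"
      using emeasure_lborel_cball_finite[of "0::real\<times>real" "min c a"]
      by (intro emeasure_Diff) auto
    also have "\<dots> = ennreal (pi*a^2 - pi*?m^2)"
      using False a by (simp add: emeasure_cball2 ennreal_minus power_mono)
    finally show "emeasure lborel (cball (0::real\<times>real) a \<inter> {p. c < norm p}) = ennreal (pi*a^2 - pi*(max 0 (min c a))^2)"
      using False eq a by (simp add: max_def)
  qed
qed

lemma balls_borel[measurable]: "cball (0::real\<times>real) a \<in> sets borel" "ball (0::real\<times>real) a \<in> sets borel"
  by auto

lemma radial_integral:
  fixes q :: "real \<Rightarrow> real"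
  assumes q[measurable]: "q \<in> borel_measurable borel" and a: "a \<ge> 0"
  shows "(LINT p:cball (0::real\<times>real) a|lborel. q (norm p)) = 2*pi * (LINT x:{0..a}|lborel. x * q x)"
proof -
  have "(LINT p:cball (0::real\<times>real) a|lborel. q (norm p))
      = integral\<^sup>L (density lborel (\<lambda>p. ennreal (indicator (cball (0::real\<times>real) a) p))) (\<lambda>p. q (norm p))"
    unfolding set_lebesgue_integral_def by (subst integral_density) auto
  also have "(\<lambda>p. ennreal (indicator (cball (0::real\<times>real) a) p)) = indicator (cball 0 a)"
    by (auto split: split_indicator)
  also have "integral\<^sup>L (density lborel (indicator (cball (0::real\<times>real) a))) (\<lambda>p. q (norm p))
      = integral\<^sup>L (distr (density lborel (indicator (cball (0::real\<times>real) a))) borel norm) q"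
    by (subst integral_distr) auto
  also have "\<dots> = integral\<^sup>L (density lborel (\<lambda>x. ennreal (2*pi*x * indicator {0..a} x))) q"
    unfolding distr_norm_cball[OF a]
    by (intro arg_cong2[where f="\<lambda>M f. integral\<^sup>L M f"] arg_cong2[where f=density] refl ext)
       (auto split: split_indicator)
  also have "\<dots> = integral\<^sup>L lborel (\<lambda>x. (2*pi*x * indicator {0..a} x) *\<^sub>R q x)"
    by (subst integral_density) (auto split: split_indicator)
  also have "\<dots> = integral\<^sup>L lborel (\<lambda>x. (2*pi) * (indicator {0..a} x *\<^sub>R (x * q x)))"
    by (intro arg_cong2[where f="\<lambda>M f. integral\<^sup>L M f"] refl ext) (auto split: split_indicator)
  also have "\<dots> = 2*pi * (LINT x:{0..a}|lborel. x * q x)"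
    unfolding set_lebesgue_integral_def by (rule integral_mult_right_zero)
  finally show ?thesis .
qed

lemma radial_integral_ball:
  fixes q :: "real \<Rightarrow> real"
  assumes q[measurable]: "q \<in> borel_measurable borel" and a: "a \<ge> 0"
  shows "(LINT p:ball (0::real\<times>real) a|lborel. q (norm p)) = 2*pi * (LINT x:{0..a}|lborel. x * q x)"
proof -
  have "(LINT p:ball (0::real\<times>real) a|lborel. q (norm p)) = (LINT p:cball (0::real\<times>real) a|lborel. q (norm p))"
    unfolding set_lebesgue_integral_def
    using AE_not_in[OF sphere_null2[of a]]
    by (intro integral_cong_AE) (auto split: split_indicator elim!: eventually_mono)
  then show ?thesis using radial_integral[OF q a] by simp
qed



lemma ppp_lfin: "ppp M \<Phi> \<rho> \<Longrightarrow> \<omega> \<in> space M \<Longrightarrow> lfin (\<Phi> \<omega>)"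
  unfolding ppp_def lfin_def by blast

lemma ppp_card_meas: "ppp M \<Phi> \<rho> \<Longrightarrow> B \<in> sets borel \<Longrightarrow> bounded B \<Longrightarrow>
   (\<lambda>\<omega>. card (\<Phi> \<omega> \<inter> B)) \<in> measurable M (count_space UNIV)"
  unfolding ppp_def by blast

lemma ppp_empty_eq:
  assumes "ppp M \<Phi> \<rho>" "bounded B"
  shows "{\<omega>\<in>space M. \<Phi> \<omega> \<inter> B = {}} = (\<lambda>\<omega>. card (\<Phi> \<omega> \<inter> B)) -` {0} \<inter> space M"
proof -
  have "finite (\<Phi> \<omega> \<inter> B)" if "\<omega> \<in> space M" for \<omega>
    using assms that unfolding ppp_def by blast
  then show ?thesis by auto
qed

lemma ppp_empty_sets:
  assumes "ppp M \<Phi> \<rho>" "B \<in> sets borel" "bounded B"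
  shows "{\<omega>\<in>space M. \<Phi> \<omega> \<inter> B = {}} \<in> sets M"
  unfolding ppp_empty_eq[OF assms(1,3)]
  by (rule measurable_sets[OF ppp_card_meas[OF assms]]) simp

lemma ppp_void:
  assumes "ppp M \<Phi> \<rho>" "B \<in> sets borel" "bounded B"
  shows "measure M {\<omega>\<in>space M. \<Phi> \<omega> \<inter> B = {}} = exp (- (LINT p:B|lborel. \<rho> p))"
proof -
  have "measure M {\<omega>\<in>space M. card (\<Phi> \<omega> \<inter> B) = 0} = exp (- (LINT p:B|lborel. \<rho> p)) * (LINT p:B|lborel. \<rho> p) ^ 0 / fact 0"
    using assms unfolding ppp_def by blast
  moreover have "{\<omega>\<in>space M. card (\<Phi> \<omega> \<inter> B) = 0} = {\<omega>\<in>space M. \<Phi> \<omega> \<inter> B = {}}"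
    using ppp_empty_eq[OF assms(1,3)] by auto
  ultimately show ?thesis by simp
qed

definition EE :: "real set set" where "EE = insert UNIV {{0..c} | c. 0 \<le> c}"
definition MZ :: "real measure" where "MZ = sigma UNIV EE"

lemma sets_MZ: "sets MZ = sigma_sets UNIV EE"
  unfolding MZ_def by (rule sets_measure_of) auto

lemma space_MZ: "space MZ = UNIV"
  unfolding MZ_def by (rule space_measure_of) auto

lemma zr_meas:
  assumes "ppp M \<Phi> \<rho>"
  shows "(\<lambda>\<omega>. zr (\<Phi> \<omega>)) \<in> measurable M MZ"
  unfolding MZ_def
proof (rule measurable_measure_of)
  show "(\<lambda>\<omega>. zr (\<Phi> \<omega>)) \<in> space M \<rightarrow> UNIV" by auto
  show "EE \<subseteq> Pow UNIV" by auto
  fix A assume "A \<in> EE"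
  then consider "A = UNIV" | c where "0 \<le> c" "A = {0..c}" unfolding EE_def by auto
  then show "(\<lambda>\<omega>. zr (\<Phi> \<omega>)) -` A \<inter> space M \<in> sets M"
  proof cases
    case 1 then show ?thesis by simp
  next
    case 2
    have "(\<lambda>\<omega>. zr (\<Phi> \<omega>)) -` A \<inter> space M = space M - {\<omega>\<in>space M. \<Phi> \<omega> \<inter> cball 0 c = {}}"
    proof (intro set_eqI)
      fix \<omega>
      show "\<omega> \<in> (\<lambda>\<omega>. zr (\<Phi> \<omega>)) -` A \<inter> space M \<longleftrightarrow> \<omega> \<in> space M - {\<omega>\<in>space M. \<Phi> \<omega> \<inter> cball 0 c = {}}"
        using zr_cball[OF ppp_lfin[OF assms] 2(1), of \<omega>] unfolding 2(2) by auto
    qed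
    also have "\<dots> \<in> sets M"
      by (intro sets.Diff sets.top ppp_empty_sets[OF assms]) auto
    finally show ?thesis .
  qed
qed

definition qq :: "real \<Rightarrow> real" where "qq z = (if z < 0 then -1 else z)"

lemma qq_zr: "qq (zr S) = zr S"
  using zr_cases[of S] by (auto simp: qq_def)

lemma qq_meas: "qq \<in> measurable MZ borel"
proof (rule borel_measurableI_le)
  fix y :: real
  have neg: "{x::real. x < 0} \<in> sigma_sets UNIV EE"
  proof -
    have "(\<Union>n::nat. {0..real n}) \<in> sigma_sets UNIV EE"
      by (intro sigma_sets.Union sigma_sets.Basic) (auto simp: EE_def)
    then have "UNIV - (\<Union>n::nat. {0..real n}) \<in> sigma_sets UNIV EE"
      by (rule sigma_sets.Compl)
    also have "UNIV - (\<Union>n::nat. {0..real n}) = {x::real. x < 0}"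
    proof (intro set_eqI iffI)
      fix x :: real assume "x \<in> UNIV - (\<Union>n::nat. {0..real n})"
      moreover obtain n :: nat where "x \<le> real n" using real_arch_simple by blast
      ultimately show "x \<in> {x. x < 0}" by force
    qed auto
    finally show ?thesis .
  qed
  consider "y < -1" | "-1 \<le> y" "y < 0" | "0 \<le> y" by linarith
  then show "{x \<in> space MZ. qq x \<le> y} \<in> sets MZ"
  proof cases
    case 1
    then have "{x \<in> space MZ. qq x \<le> y} = {}" by (auto simp: qq_def)
    then show ?thesis using sets.empty_sets[of MZ] by metis
  next
    case 2
    then have "{x \<in> space MZ. qq x \<le> y} = {x. x < 0}" by (auto simp: qq_def space_MZ)
    then show ?thesis using neg by (simp add: sets_MZ)
  next
    case 3
    then have "{x \<in> space MZ. qq x \<le> y} = {x. x < 0} \<union> {0..y}" by (auto simp: qq_def space_MZ)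
    moreover have "{0..y} \<in> sigma_sets UNIV EE" using 3 by (intro sigma_sets.Basic) (auto simp: EE_def)
    ultimately show ?thesis using neg by (simp add: sets_MZ sigma_sets_Un)
  qed
qed

lemma zr_borel:
  assumes "ppp M \<Phi> \<rho>"
  shows "(\<lambda>\<omega>. zr (\<Phi> \<omega>)) \<in> borel_measurable M"
proof -
  have "(\<lambda>\<omega>. qq (zr (\<Phi> \<omega>))) \<in> borel_measurable M"
    using measurable_comp[OF zr_meas[OF assms] qq_meas] by (simp add: comp_def)
  then show ?thesis by (simp add: qq_zr)
qed



lemma Int_stable_EE: "Int_stable EE"
proof (rule Int_stableI)
  fix a b assume "a \<in> EE" "b \<in> EE"
  then show "a \<inter> b \<in> EE" unfolding EE_def
  proof (elim insertE CollectE exE conjE)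
    fix c d :: real assume "a = {0..c}" "0 \<le> c" "b = {0..d}" "0 \<le> d"
    then have "a \<inter> b = {0..min c d}" by auto
    then show "a \<inter> b \<in> insert UNIV {{0..c} |c. 0 \<le> c}" using \<open>0 \<le> c\<close> \<open>0 \<le> d\<close> by auto
  qed auto
qed

lemma indep_Z:
  fixes \<Phi>s :: "nat \<Rightarrow> 'a \<Rightarrow> (real\<times>real) set"
  assumes P: "prob_space M"
   and pp: "\<And>i. i \<in> {0,1,2} \<Longrightarrow> \<exists>\<rho>. ppp M (\<Phi>s i) \<rho>"
   and ind: "indep_pps M \<Phi>s {0,1,2}"
  shows "prob_space.indep_vars M (\<lambda>_. borel) (\<lambda>i \<omega>. zr (\<Phi>s i \<omega>)) {0,1,2}"
proof -
  interpret prob_space M by fact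
  let ?I = "{0,1,2::nat}"
  let ?Z = "\<lambda>i \<omega>. zr (\<Phi>s i \<omega>)"
  let ?P = "PiM {..<3::nat} (\<lambda>_. count_space (UNIV::nat set))"
  have rv: "random_variable MZ (?Z i)" if "i \<in> ?I" for i using pp[OF that] zr_meas by blast
  have Zind: "indep_vars (\<lambda>_. MZ) ?Z ?I"
  proof (subst indep_vars_finite[where E="\<lambda>_. EE"])
    show "?I \<noteq> {}" "finite ?I" by auto
    show "sets MZ = sigma_sets (space MZ) EE" for i :: nat by (simp add: sets_MZ space_MZ)
    show "random_variable MZ (?Z i)" if "i \<in> ?I" for i using rv[OF that] .
    show "Int_stable EE" for i :: nat by (rule Int_stable_EE)
    show "space MZ \<in> EE" for i :: nat by (simp add: space_MZ EE_def)
    show "EE \<subseteq> Pow (space MZ)" for i :: nat by (simp add: space_MZ)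
    show "\<forall>A\<in>\<Pi> i\<in>?I. EE. prob (\<Inter>j\<in>?I. ?Z j -` A j \<inter> space M) = (\<Prod>j\<in>?I. prob (?Z j -` A j \<inter> space M))"
    proof
      fix A assume A: "A \<in> (\<Pi> i\<in>?I. EE)"
      define c where "c j = (if A j = UNIV then 0 else (SOME c. 0 \<le> c \<and> A j = {0..c}))" for j
      have cA: "A j = UNIV \<or> (0 \<le> c j \<and> A j = {0..c j})" if "j \<in> ?I" for j
      proof -
        have "A j \<in> EE" using A that by auto
        then consider "A j = UNIV" | "\<exists>c. 0 \<le> c \<and> A j = {0..c}" unfolding EE_def by auto
        then show ?thesis
        proof cases
          case 2
          have s: "0 \<le> (SOME c. 0 \<le> c \<and> A j = {0..c}) \<and> A j = {0..(SOME c. 0 \<le> c \<and> A j = {0..c})}"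
            using 2 by (rule someI_ex)
          have "0 \<le> c j \<and> A j = {0..c j}" if "A j \<noteq> UNIV"
            unfolding c_def using that s by simp
          then show ?thesis by blast
        qed simp
      qed
      define B where "B j = cball (0::real\<times>real) (c j)" for j
      define V where "V i \<omega> = (\<lambda>j\<in>{..<3::nat}. card (\<Phi>s i \<omega> \<inter> B j))" for i \<omega>
      have Vind: "indep_vars (\<lambda>_. ?P) V ?I"
        using ind unfolding indep_pps_def V_def B_def by (auto simp: borel_closed)
      define X where "X j = {v \<in> space ?P. A j = UNIV \<or> v j \<noteq> 0}" for j
      have Xs: "X j \<in> sets ?P" if "j \<in> ?I" for j
      proof -
        have j: "j \<in> {..<3}" using that by auto
        have "Measurable.pred ?P (\<lambda>v. A j = UNIV \<or> v j \<noteq> 0)"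
          using j by measurable
        then show ?thesis unfolding X_def by (simp add: pred_def)
      qed
      have Vsp: "V j \<omega> \<in> space ?P" for j \<omega> by (simp add: V_def space_PiM)
      have eqs: "?Z j -` A j \<inter> space M = V j -` X j \<inter> space M" if j: "j \<in> ?I" for j
      proof (cases "A j = UNIV")
        case True then show ?thesis using Vsp by (auto simp: X_def)
      next
        case False
        with cA[OF j] have c0: "0 \<le> c j" and Aj: "A j = {0..c j}" by auto
        obtain \<rho> where pj: "ppp M (\<Phi>s j) \<rho>" using pp[OF j] by blast
        show ?thesis
        proof (intro set_eqI)
          fix \<omega>
          show "\<omega> \<in> ?Z j -` A j \<inter> space M \<longleftrightarrow> \<omega> \<in> V j -` X j \<inter> space M"
          proof (cases "\<omega> \<in> space M")
            case True
            have fin: "finite (\<Phi>s j \<omega> \<inter> B j)"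
              using ppp_lfin[OF pj True] unfolding lfin_def B_def by auto
            have "V j \<omega> j = card (\<Phi>s j \<omega> \<inter> B j)" using j by (auto simp: V_def)
            then have e2: "V j \<omega> j \<noteq> 0 \<longleftrightarrow> \<Phi>s j \<omega> \<inter> B j \<noteq> {}"
              using fin by simp
            have e1: "\<omega> \<in> ?Z j -` A j \<longleftrightarrow> \<Phi>s j \<omega> \<inter> B j \<noteq> {}"
              using zr_cball[OF ppp_lfin[OF pj True] c0] unfolding Aj B_def by simp
            have e3: "\<omega> \<in> V j -` X j \<longleftrightarrow> V j \<omega> j \<noteq> 0"
              using Vsp[of j \<omega>] False unfolding X_def by simp
            show ?thesis using e1 e2 e3 True by blast
          qed auto
        qed
      qed
      have "prob (\<Inter>j\<in>?I. ?Z j -` A j \<inter> space M) = prob (\<Inter>j\<in>?I. V j -` X j \<inter> space M)"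
        using eqs by (intro arg_cong[where f=prob] INF_cong) auto
      also have "\<dots> = (\<Prod>j\<in>?I. prob (V j -` X j \<inter> space M))"
        by (rule indep_varsD[OF Vind]) (auto simp: Xs)
      also have "\<dots> = (\<Prod>j\<in>?I. prob (?Z j -` A j \<inter> space M))"
        using eqs by (intro prod.cong) auto
      finally show "prob (\<Inter>j\<in>?I. ?Z j -` A j \<inter> space M) = (\<Prod>j\<in>?I. prob (?Z j -` A j \<inter> space M))" .
    qed
  qed
  have "indep_vars (\<lambda>_. borel) (\<lambda>i \<omega>. qq (?Z i \<omega>)) ?I"
    by (rule indep_vars_compose2[OF Zind]) (rule qq_meas)
  then show ?thesis by (simp add: qq_zr)
qed



lemma joint3:
  fixes X :: "nat \<Rightarrow> 'a \<Rightarrow> real"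
  assumes Pr: "prob_space M" and ind: "prob_space.indep_vars M (\<lambda>_. borel) X {0,1,2}"
  and S: "{(x,(y,z)). x \<in> P \<and> y \<in> T x \<and> z \<in> U x} \<in> sets (borel \<Otimes>\<^sub>M (borel \<Otimes>\<^sub>M borel))"
  and PTU: "P \<in> sets borel" "\<And>x. T x \<in> sets borel" "\<And>x. U x \<in> sets borel"
  shows "emeasure M {\<omega>\<in>space M. X 1 \<omega> \<in> P \<and> X 0 \<omega> \<in> T (X 1 \<omega>) \<and> X 2 \<omega> \<in> U (X 1 \<omega>)} =
    (\<integral>\<^sup>+ x. indicator P x * emeasure M {\<omega>\<in>space M. X 0 \<omega> \<in> T x} * emeasure M {\<omega>\<in>space M. X 2 \<omega> \<in> U x} \<partial>(distr M borel (X 1)))"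
proof -
  interpret prob_space M by fact
  have rv: "random_variable borel (X i)" if "i \<in> {0,1,2}" for i using ind that unfolding indep_vars_def by auto
  note rv0[measurable] = rv[of 0] and rv1[measurable] = rv[of 1] and rv2[measurable] = rv[of 2]
  have iv1: "indep_var (borel \<Otimes>\<^sub>M borel) (\<lambda>\<omega>. (X 1 \<omega>, 0::real)) (borel \<Otimes>\<^sub>M borel) (\<lambda>\<omega>. (X 0 \<omega>, X 2 \<omega>))"
  proof -
    have "indep_var (PiM {1} (\<lambda>_. borel)) (\<lambda>\<omega>. restrict (\<lambda>i. X i \<omega>) {1}) (PiM {0,2} (\<lambda>_. borel)) (\<lambda>\<omega>. restrict (\<lambda>i. X i \<omega>) {0,2})"
      by (rule indep_var_restrict[OF ind]) auto
    then have "indep_var (borel \<Otimes>\<^sub>M borel) ((\<lambda>f. (f 1, 0::real)) \<circ> (\<lambda>\<omega>. restrict (\<lambda>i. X i \<omega>) {1})) (borel \<Otimes>\<^sub>M borel) ((\<lambda>f. (f 0, f 2)) \<circ> (\<lambda>\<omega>. restrict (\<lambda>i. X i \<omega>) {0,2}))"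
      by (rule indep_var_compose) measurable
    then show ?thesis by (simp add: comp_def)
  qed
  have iv2: "indep_var borel (X 0) borel (X 2)"
  proof -
    have "indep_var (PiM {0} (\<lambda>_. borel)) (\<lambda>\<omega>. restrict (\<lambda>i. X i \<omega>) {0}) (PiM {2} (\<lambda>_. borel)) (\<lambda>\<omega>. restrict (\<lambda>i. X i \<omega>) {2})"
      by (rule indep_var_restrict[OF ind]) auto
    then have "indep_var borel ((\<lambda>f. f 0) \<circ> (\<lambda>\<omega>. restrict (\<lambda>i. X i \<omega>) {0})) borel ((\<lambda>f. f 2) \<circ> (\<lambda>\<omega>. restrict (\<lambda>i. X i \<omega>) {2}))"
      by (rule indep_var_compose) measurable
    then show ?thesis by (simp add: comp_def)
  qed
  let ?m0 = "distr M borel (X 0)" and ?m1 = "distr M borel (X 1)" and ?m2 = "distr M borel (X 2)"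
  have D2: "distr M (borel \<Otimes>\<^sub>M borel) (\<lambda>\<omega>. (X 0 \<omega>, X 2 \<omega>)) = ?m0 \<Otimes>\<^sub>M ?m2"
    using iv2 unfolding indep_var_distribution_eq by simp
  let ?m1' = "distr M (borel \<Otimes>\<^sub>M borel) (\<lambda>\<omega>. (X 1 \<omega>, 0::real))"
  have D3: "distr M ((borel \<Otimes>\<^sub>M borel) \<Otimes>\<^sub>M (borel \<Otimes>\<^sub>M borel)) (\<lambda>\<omega>. ((X 1 \<omega>, 0::real), (X 0 \<omega>, X 2 \<omega>))) = ?m1' \<Otimes>\<^sub>M (?m0 \<Otimes>\<^sub>M ?m2)"
    using iv1 unfolding indep_var_distribution_eq D2 by simp
  have p0: "prob_space ?m0" and p2: "prob_space ?m2"
    by (auto intro!: prob_space_distr)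
  have sf: "sigma_finite_measure (?m0 \<Otimes>\<^sub>M ?m2)"
    by (intro prob_space_imp_sigma_finite prob_space_pair p0 p2)
  have sf2: "sigma_finite_measure ?m2" by (intro prob_space_imp_sigma_finite p2)
  let ?S = "{(x,(y,z)). x \<in> P \<and> y \<in> T x \<and> z \<in> U x}"
  let ?S' = "{(u::real\<times>real,(y,z)). fst u \<in> P \<and> y \<in> T (fst u) \<and> z \<in> U (fst u)}"
  have S': "?S' \<in> sets ((borel \<Otimes>\<^sub>M borel) \<Otimes>\<^sub>M (borel \<Otimes>\<^sub>M borel))"
  proof -
    have m: "(\<lambda>p::(real\<times>real)\<times>(real\<times>real). (fst (fst p), snd p)) \<in> measurable ((borel \<Otimes>\<^sub>M borel) \<Otimes>\<^sub>M (borel \<Otimes>\<^sub>M borel)) (borel \<Otimes>\<^sub>M (borel \<Otimes>\<^sub>M borel))"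
      by measurable
    have "(\<lambda>p::(real\<times>real)\<times>(real\<times>real). (fst (fst p), snd p)) -` ?S \<inter> space ((borel \<Otimes>\<^sub>M borel) \<Otimes>\<^sub>M (borel \<Otimes>\<^sub>M borel)) = ?S'"
      by (auto simp: space_pair_measure)
    then show ?thesis using measurable_sets[OF m S] by simp
  qed
  have "{\<omega>\<in>space M. X 1 \<omega> \<in> P \<and> X 0 \<omega> \<in> T (X 1 \<omega>) \<and> X 2 \<omega> \<in> U (X 1 \<omega>)}
      = (\<lambda>\<omega>. ((X 1 \<omega>, 0::real), (X 0 \<omega>, X 2 \<omega>))) -` ?S' \<inter> space M" (is "_ = ?pre") by auto
  moreover have mF: "(\<lambda>\<omega>. ((X 1 \<omega>, 0::real), (X 0 \<omega>, X 2 \<omega>))) \<in> measurable M ((borel \<Otimes>\<^sub>M borel) \<Otimes>\<^sub>M (borel \<Otimes>\<^sub>M borel))"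
    by measurable
  ultimately have "emeasure M {\<omega>\<in>space M. X 1 \<omega> \<in> P \<and> X 0 \<omega> \<in> T (X 1 \<omega>) \<and> X 2 \<omega> \<in> U (X 1 \<omega>)}
      = emeasure (distr M ((borel \<Otimes>\<^sub>M borel) \<Otimes>\<^sub>M (borel \<Otimes>\<^sub>M borel)) (\<lambda>\<omega>. ((X 1 \<omega>, 0::real), (X 0 \<omega>, X 2 \<omega>)))) ?S'"
    using emeasure_distr[OF mF S'] by simp
  also have "\<dots> = emeasure (?m1' \<Otimes>\<^sub>M (?m0 \<Otimes>\<^sub>M ?m2)) ?S'" unfolding D3 ..
  also have "\<dots> = (\<integral>\<^sup>+u. emeasure (?m0 \<Otimes>\<^sub>M ?m2) (Pair u -` ?S') \<partial>?m1')"
    using S' by (intro sigma_finite_measure.emeasure_pair_measure_alt[OF sf]) simp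
  also have "\<dots> = (\<integral>\<^sup>+\<omega>. emeasure (?m0 \<Otimes>\<^sub>M ?m2) (Pair (X 1 \<omega>, 0::real) -` ?S') \<partial>M)"
  proof (rule nn_integral_distr)
    show "(\<lambda>\<omega>. (X 1 \<omega>, 0::real)) \<in> measurable M (borel \<Otimes>\<^sub>M borel)" by measurable
    show "(\<lambda>u. emeasure (?m0 \<Otimes>\<^sub>M ?m2) (Pair u -` ?S')) \<in> borel_measurable ?m1'"
      unfolding measurable_distr_eq1 using sigma_finite_measure.measurable_emeasure_Pair[OF sf, of ?S' "borel \<Otimes>\<^sub>M borel"] S'
      by (simp cong: sets_pair_measure_cong)
  qed
  also have "\<dots> = (\<integral>\<^sup>+\<omega>. emeasure (?m0 \<Otimes>\<^sub>M ?m2) (Pair (X 1 \<omega>) -` ?S) \<partial>M)"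
    by (intro nn_integral_cong arg_cong[where f="emeasure (?m0 \<Otimes>\<^sub>M ?m2)"]) auto
  also have "\<dots> = (\<integral>\<^sup>+x. emeasure (?m0 \<Otimes>\<^sub>M ?m2) (Pair x -` ?S) \<partial>?m1)"
  proof (rule nn_integral_distr[symmetric])
    show "X 1 \<in> measurable M borel" by measurable
    show "(\<lambda>u. emeasure (?m0 \<Otimes>\<^sub>M ?m2) (Pair u -` ?S)) \<in> borel_measurable ?m1"
      unfolding measurable_distr_eq1 using sigma_finite_measure.measurable_emeasure_Pair[OF sf, of ?S borel] S
      by (simp cong: sets_pair_measure_cong)
  qed
  also have "\<dots> = (\<integral>\<^sup>+ x. indicator P x * emeasure M {\<omega>\<in>space M. X 0 \<omega> \<in> T x} * emeasure M {\<omega>\<in>space M. X 2 \<omega> \<in> U x} \<partial>?m1)"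
  proof (intro nn_integral_cong)
    fix x
    show "emeasure (?m0 \<Otimes>\<^sub>M ?m2) (Pair x -` ?S) = indicator P x * emeasure M {\<omega>\<in>space M. X 0 \<omega> \<in> T x} * emeasure M {\<omega>\<in>space M. X 2 \<omega> \<in> U x}"
    proof (cases "x \<in> P")
      case True
      then have "Pair x -` ?S = T x \<times> U x" by auto
      then have "emeasure (?m0 \<Otimes>\<^sub>M ?m2) (Pair x -` ?S) = emeasure ?m0 (T x) * emeasure ?m2 (U x)"
        using PTU by (simp add: sigma_finite_measure.emeasure_pair_measure_Times[OF sf2])
      also have "emeasure ?m0 (T x) = emeasure M {\<omega>\<in>space M. X 0 \<omega> \<in> T x}"
        using PTU by (subst emeasure_distr) (auto intro!: arg_cong[where f="emeasure M"])
      also have "emeasure ?m2 (U x) = emeasure M {\<omega>\<in>space M. X 2 \<omega> \<in> U x}"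
        using PTU by (subst emeasure_distr) (auto intro!: arg_cong[where f="emeasure M"])
      finally show ?thesis using True by simp
    next
      case False
      then have "Pair x -` ?S = {}" by auto
      then show ?thesis using False by simp
    qed
  qed
  finally show ?thesis .
qed



lemma set_int_nonneg:
  fixes f :: "'a \<Rightarrow> real"
  assumes "\<And>x. x \<in> A \<Longrightarrow> 0 \<le> f x"
  shows "0 \<le> (LINT x:A|M. f x)"
  unfolding set_lebesgue_integral_def
  by (rule integral_nonneg_AE) (auto simp: assms split: split_indicator)

lemma set_integrable_bdd:
  fixes g :: "real \<Rightarrow> real"
  assumes [measurable]: "g \<in> borel_measurable borel" "A \<in> sets borel" and A: "A \<subseteq> {a..b}"
    and gb: "\<And>x. x \<in> A \<Longrightarrow> \<bar>g x\<bar> \<le> C"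
  shows "set_integrable lborel A g"
  unfolding set_integrable_def
proof (rule integrableI_bounded_set_indicator[where B=C])
  show "emeasure lborel A < \<infinity>"
  proof -
    have "emeasure lborel {a..b} < \<infinity>" by (cases "a \<le> b") auto
    then show ?thesis using emeasure_mono[OF A, of lborel] by (simp add: le_less_trans)
  qed
qed (auto simp: gb)

lemma nn_set_integral:
  fixes g :: "real \<Rightarrow> real"
  assumes [measurable]: "g \<in> borel_measurable borel" "A \<in> sets borel" and A: "A \<subseteq> {a..b}"
    and gb: "\<And>x. x \<in> A \<Longrightarrow> 0 \<le> g x \<and> g x \<le> C"
  shows "(\<integral>\<^sup>+x. indicator A x * ennreal (g x) \<partial>lborel) = ennreal (LINT x:A|lborel. g x)"
proof -
  have int: "set_integrable lborel A g"
    by (rule set_integrable_bdd[OF assms(1,2,3), of C]) (auto dest: gb)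
  have "(\<integral>\<^sup>+x. indicator A x * ennreal (g x) \<partial>lborel) = (\<integral>\<^sup>+x. ennreal (indicator A x *\<^sub>R g x) \<partial>lborel)"
    by (intro nn_integral_cong) (auto split: split_indicator)
  also have "\<dots> = ennreal (LINT x:A|lborel. g x)"
    unfolding set_lebesgue_integral_def
    using int gb unfolding set_integrable_def
    by (intro nn_integral_eq_integral) (auto split: split_indicator)
  finally show ?thesis .
qed

lemma intG_cont:
  fixes g :: "real \<Rightarrow> real" and c C :: real
  assumes gm[measurable]: "g \<in> borel_measurable borel" and c: "0 \<le> c"
    and gb: "\<And>x. x \<in> {0..c} \<Longrightarrow> 0 \<le> g x \<and> g x \<le> C"
  shows "continuous_on {0..c} (\<lambda>x. LINT y:{0..x}|lborel. g y)"
proof -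
  define G where "G = (\<lambda>x. LINT y:{0..x}|lborel. g y)"
  have C0: "0 \<le> C" using gb[of 0] c by auto
  have sint: "set_integrable lborel A g" if "A \<in> sets borel" "A \<subseteq> {0..c}" for A
    by (rule set_integrable_bdd[OF gm that, of C]) (use that gb in auto)
  have split: "G y = G x + (LINT t:{x<..y}|lborel. g t)" if "0 \<le> x" "x \<le> y" "y \<le> c" for x y
  proof -
    have "{0..y} = {0..x} \<union> {x<..y}" using that by auto
    then have "G y = (LINT t:{0..x} \<union> {x<..y}|lborel. g t)" unfolding G_def by simp
    also have "\<dots> = G x + (LINT t:{x<..y}|lborel. g t)"
      unfolding G_def using that by (intro set_integral_Un sint) auto
    finally show ?thesis .
  qed
  have incr: "0 \<le> (LINT t:{x<..y}|lborel. g t) \<and> (LINT t:{x<..y}|lborel. g t) \<le> C * (y - x)"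
    if "0 \<le> x" "x \<le> y" "y \<le> c" for x y
  proof
    show "0 \<le> (LINT t:{x<..y}|lborel. g t)" using that gb by (intro set_int_nonneg) auto
    have "(LINT t:{x<..y}|lborel. g t) \<le> (LINT t:{x<..y}|lborel. C)"
      using that gb by (intro set_integral_mono sint) (auto simp: set_integrable_def)
    also have "\<dots> = C * (y - x)" using that by (simp add: set_integral_const)
    finally show "(LINT t:{x<..y}|lborel. g t) \<le> C * (y - x)" .
  qed
  have lip: "C-lipschitz_on {0..c} G"
  proof (rule lipschitz_onI)
    fix x y assume "x \<in> {0..c}" "y \<in> {0..c}"
    then show "dist (G x) (G y) \<le> C * dist x y"
      using split[of x y] incr[of x y] split[of y x] incr[of y x]
      by (cases "x \<le> y") (auto simp: dist_real_def abs_if algebra_simps)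
  qed (rule C0)
  show ?thesis using lipschitz_on_continuous_on[OF lip] unfolding G_def .
qed

lemma meas_clamp:
  fixes G :: "real \<Rightarrow> real"
  assumes "continuous_on {0..s} G" "0 \<le> s"
  shows "(\<lambda>x. G (max 0 (min s x))) \<in> borel_measurable borel"
proof (rule borel_measurable_continuous_onI)
  show "continuous_on UNIV (\<lambda>x. G (max 0 (min s x)))"
    by (rule continuous_on_compose2[OF assms(1)]) (use assms(2) in \<open>auto intro!: continuous_intros\<close>)
qed

lemma ftc_exp:
  fixes g :: "real \<Rightarrow> real" and c C :: real
  assumes gm[measurable]: "g \<in> borel_measurable borel" and c: "0 \<le> c"
    and gb: "\<And>x. x \<in> {0..c} \<Longrightarrow> 0 \<le> g x \<and> g x \<le> C"
  defines "G \<equiv> \<lambda>x. LINT y:{0..x}|lborel. g y"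
  shows "(\<integral>\<^sup>+ x. indicator {0..c} x * ennreal (g x * exp (- G x)) \<partial>lborel) = ennreal (1 - exp (- G c))"
proof -
  have C0: "0 \<le> C" using gb[of 0] c by auto
  have sint: "set_integrable lborel A g" if "A \<in> sets borel" "A \<subseteq> {0..c}" for A
    by (rule set_integrable_bdd[OF gm that, of C]) (use that gb in auto)
  have split: "G y = G x + (LINT t:{x<..y}|lborel. g t)" if "0 \<le> x" "x \<le> y" "y \<le> c" for x y
  proof -
    have "{0..y} = {0..x} \<union> {x<..y}" using that by auto
    then have "G y = (LINT t:{0..x} \<union> {x<..y}|lborel. g t)" unfolding G_def by simp
    also have "\<dots> = G x + (LINT t:{x<..y}|lborel. g t)"
      unfolding G_def using that by (intro set_integral_Un sint) auto
    finally show ?thesis .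
  qed
  have incr: "0 \<le> (LINT t:{x<..y}|lborel. g t) \<and> (LINT t:{x<..y}|lborel. g t) \<le> C * (y - x)"
    if "0 \<le> x" "x \<le> y" "y \<le> c" for x y
  proof
    show "0 \<le> (LINT t:{x<..y}|lborel. g t)" using that gb by (intro set_int_nonneg) auto
    have "(LINT t:{x<..y}|lborel. g t) \<le> (LINT t:{x<..y}|lborel. C)"
      using that gb by (intro set_integral_mono sint) (auto simp: set_integrable_def)
    also have "\<dots> = C * (y - x)" using that by (simp add: set_integral_const)
    finally show "(LINT t:{x<..y}|lborel. g t) \<le> C * (y - x)" .
  qed
  have G0: "G 0 = 0"
  proof -
    have "AE x in lborel. indicator {0..0} x *\<^sub>R g x = (0::real)"
      using AE_lborel_singleton[of 0] by (rule eventually_mono) (auto split: split_indicator)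
    then show ?thesis unfolding G_def set_lebesgue_integral_def by (rule integral_eq_zero_AE)
  qed
  have Gnn: "0 \<le> G x" if "0 \<le> x" "x \<le> c" for x using split[of 0 x] incr[of 0 x] that G0 by auto
  have mono: "G x \<le> G y" if "0 \<le> x" "x \<le> y" "y \<le> c" for x y using split[OF that] incr[OF that] by auto
  have lip: "C-lipschitz_on {0..c} G"
  proof (rule lipschitz_onI)
    fix x y assume "x \<in> {0..c}" "y \<in> {0..c}"
    then show "dist (G x) (G y) \<le> C * dist x y"
      using split[of x y] incr[of x y] split[of y x] incr[of y x]
      by (cases "x \<le> y") (auto simp: dist_real_def abs_if algebra_simps)
  qed (rule C0)
  have contG: "continuous_on {0..c} G" by (rule lipschitz_on_continuous_on[OF lip])
  define cl where "cl x = max 0 (min c x)" for x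
  define G' where "G' x = G (cl x)" for x
  have cl01: "cl x \<in> {0..c}" for x using c by (auto simp: cl_def)
  have G'eq: "G' x = G x" if "x \<in> {0..c}" for x using that by (auto simp: G'_def cl_def)
  have contG': "continuous_on UNIV G'"
    unfolding G'_def
    by (rule continuous_on_compose2[OF contG]) (use c in \<open>auto simp: cl_def cl01 intro!: continuous_intros\<close>)
  have G'm[measurable]: "G' \<in> borel_measurable borel" by (rule borel_measurable_continuous_onI[OF contG'])
  define \<nu> where "\<nu> = density lborel (\<lambda>x. indicator {0..c} x * ennreal (g x))"
  have nuI: "emeasure \<nu> A = ennreal (LINT x:A \<inter> {0..c}|lborel. g x)" if [measurable]: "A \<in> sets borel" for A
  proof -
    have "emeasure \<nu> A = (\<integral>\<^sup>+x. indicator {0..c} x * ennreal (g x) * indicator A x \<partial>lborel)"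
      unfolding \<nu>_def by (rule emeasure_density) auto
    also have "\<dots> = (\<integral>\<^sup>+x. indicator (A \<inter> {0..c}) x * ennreal (g x) \<partial>lborel)"
      by (intro nn_integral_cong) (auto split: split_indicator)
    also have "\<dots> = ennreal (LINT x:A \<inter> {0..c}|lborel. g x)"
      by (rule nn_set_integral[where a=0 and b=c and C=C]) (use gb in auto)
    finally show ?thesis .
  qed
  have Gc: "0 \<le> G c" using Gnn[of c] c by auto
  have D: "distr \<nu> borel G' = density lborel (indicator {0..G c})"
  proof (rule measure_eqI_lessThan)
    show "sets (distr \<nu> borel G') = sets borel" by simp
    show "sets (density lborel (indicator {0..G c})) = sets borel" by simp
    fix y :: real
    have L: "emeasure (distr \<nu> borel G') {y<..} = emeasure \<nu> {x. y < G' x}"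
      by (subst emeasure_distr) (auto simp: \<nu>_def vimage_def)
    have R: "emeasure (density lborel (indicator {0..G c})) {y<..} = emeasure lborel ({0..G c} \<inter> {y<..})"
      by (rule emeasure_density_ind) auto
    have "emeasure \<nu> {x. y < G' x} \<le> emeasure \<nu> UNIV"
      by (rule emeasure_mono) (auto simp: \<nu>_def)
    also have "\<dots> < \<infinity>" by (subst nuI) auto
    finally show "emeasure (distr \<nu> borel G') {y<..} < \<infinity>" unfolding L .
    have "emeasure \<nu> {x. y < G' x} = emeasure lborel ({0..G c} \<inter> {y<..})"
    proof -
      consider "y < 0" | "G c \<le> y" | "0 \<le> y" "y < G c" by linarith
      then show ?thesis
      proof cases
        case 1
        have "{x. y < G' x} \<inter> {0..c} = {0..c}" using Gnn 1 G'eq by force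
        moreover have "{0..G c} \<inter> {y<..} = {0..G c}" using 1 by auto
        ultimately show ?thesis using Gc by (simp add: nuI G_def)
      next
        case 2
        have "{x. y < G' x} \<inter> {0..c} = {}" using mono[of _ c] 2 G'eq c by force
        moreover have "{0..G c} \<inter> {y<..} = {}" using 2 by auto
        ultimately show ?thesis by (simp add: nuI set_lebesgue_integral_def)
      next
        case 3
        define X where "X = {0..c} \<inter> G -` {..y}"
        have clX: "closed X" unfolding X_def by (rule continuous_closed_preimage[OF contG]) auto
        have X0: "0 \<in> X" using G0 3 c by (auto simp: X_def)
        have bX: "bdd_above X" by (rule bdd_aboveI[of _ c]) (auto simp: X_def)
        define xs where "xs = Sup X"
        have xsX: "xs \<in> X" unfolding xs_def using X0 bX clX by (intro closed_contains_Sup) auto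
        then have xs: "0 \<le> xs" "xs \<le> c" "G xs \<le> y" by (auto simp: X_def)
        have upper: "x \<le> xs" if "x \<in> X" for x unfolding xs_def by (rule cSup_upper[OF that bX])
        have Gxs: "G xs = y"
        proof (rule ccontr)
          assume "G xs \<noteq> y"
          then have "G xs \<le> y" "y \<le> G c" using xs 3 by auto
          moreover have "continuous_on {xs..c} G" using xs by (intro continuous_on_subset[OF contG]) auto
          ultimately obtain z where z: "xs \<le> z" "z \<le> c" "G z = y" using IVT'[of G xs y c] xs by auto
          then have "z \<in> X" using xs by (auto simp: X_def)
          then have "z = xs" using upper z by fastforce
          then show False using z \<open>G xs \<noteq> y\<close> by simp
        qed
        have seteq: "{x. y < G' x} \<inter> {0..c} = {xs<..c}"
        proof (intro set_eqI iffI)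
          fix x assume x: "x \<in> {x. y < G' x} \<inter> {0..c}"
          then have "y < G x" using G'eq by auto
          moreover have "x > xs"
          proof (rule ccontr)
            assume "\<not> x > xs" then have "G x \<le> G xs" using x xs by (intro mono) auto
            then show False using \<open>y < G x\<close> Gxs by simp
          qed
          ultimately show "x \<in> {xs<..c}" using x by auto
        next
          fix x assume x: "x \<in> {xs<..c}"
          then have x0: "x \<in> {0..c}" using xs by auto
          have "y < G x"
          proof (rule ccontr)
            assume "\<not> y < G x" then have "x \<in> X" using x0 by (auto simp: X_def)
            then show False using upper[of x] x by auto
          qed
          then show "x \<in> {x. y < G' x} \<inter> {0..c}" using x0 G'eq by auto
        qed
        have "emeasure \<nu> {x. y < G' x} = ennreal (LINT x:{xs<..c}|lborel. g x)"
          using seteq by (subst nuI) auto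
        also have "(LINT x:{xs<..c}|lborel. g x) = G c - y"
          using split[of xs c] xs Gxs by simp
        also have "ennreal (G c - y) = emeasure lborel ({0..G c} \<inter> {y<..})"
        proof -
          have "{0..G c} \<inter> {y<..} = {y<..G c}" using 3 by auto
          then show ?thesis using 3 by simp
        qed
        finally show ?thesis .
      qed
    qed
    then show "emeasure (distr \<nu> borel G') {y<..} = emeasure (density lborel (indicator {0..G c})) {y<..}"
      unfolding L R .
  qed
  have "(\<integral>\<^sup>+ x. indicator {0..c} x * ennreal (g x * exp (- G x)) \<partial>lborel)
      = (\<integral>\<^sup>+ x. indicator {0..c} x * ennreal (g x) * ennreal (exp (- G' x)) \<partial>lborel)"
  proof (intro nn_integral_cong)
    fix x
    show "indicator {0..c} x * ennreal (g x * exp (- G x)) = indicator {0..c} x * ennreal (g x) * ennreal (exp (- G' x))"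
    proof (cases "x \<in> {0..c}")
      case True then show ?thesis using gb[OF True] G'eq[OF True] by (simp add: ennreal_mult)
    qed simp
  qed
  also have "\<dots> = (\<integral>\<^sup>+ x. ennreal (exp (- G' x)) \<partial>\<nu>)"
    unfolding \<nu>_def by (subst nn_integral_density) auto
  also have "\<dots> = (\<integral>\<^sup>+ y. ennreal (exp (- y)) \<partial>(distr \<nu> borel G'))"
    by (subst nn_integral_distr) (auto simp: \<nu>_def)
  also have "\<dots> = (\<integral>\<^sup>+ y. indicator {0..G c} y * ennreal (exp (- y)) \<partial>lborel)"
    unfolding D by (subst nn_integral_density) auto
  also have "\<dots> = (\<integral>\<^sup>+ y\<in>{0..G c}. ennreal (exp (- y)) \<partial>lborel)"
    by (intro nn_integral_cong) (auto simp: mult.commute)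
  also have "\<dots> = ennreal ((- exp (- G c)) - (- exp (- 0)))"
    by (rule nn_integral_FTC_Icc) (auto intro!: derivative_eq_intros simp: Gc)
  finally show ?thesis by simp
qed



lemma void_cball:
  assumes pp: "ppp M \<Phi> (\<lambda>p. q (norm p))" and qm[measurable]: "q \<in> borel_measurable borel" and a: "0 \<le> a"
  shows "measure M {\<omega>\<in>space M. \<Phi> \<omega> \<inter> cball 0 a = {}} = exp (- (2*pi*(LINT x:{0..a}|lborel. x * q x)))"
  using ppp_void[OF pp, of "cball 0 a"] radial_integral[OF qm a] by (simp add: bounded_cball)

lemma void_ball:
  assumes pp: "ppp M \<Phi> (\<lambda>p. q (norm p))" and qm[measurable]: "q \<in> borel_measurable borel" and a: "0 \<le> a"
  shows "measure M {\<omega>\<in>space M. \<Phi> \<omega> \<inter> ball 0 a = {}} = exp (- (2*pi*(LINT x:{0..a}|lborel. x * q x)))"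
  using ppp_void[OF pp, of "ball 0 a"] radial_integral_ball[OF qm a] by (simp add: bounded_ball)

lemma prob_zr_Icc:
  assumes Pr: "prob_space M" and pp: "ppp M \<Phi> (\<lambda>p. q (norm p))" and qm[measurable]: "q \<in> borel_measurable borel" and c: "0 \<le> c"
  shows "emeasure M {\<omega>\<in>space M. zr (\<Phi> \<omega>) \<in> {0..c}} = ennreal (1 - exp (- (2*pi*(LINT x:{0..c}|lborel. x * q x))))"
proof -
  interpret prob_space M by fact
  have E: "{\<omega>\<in>space M. \<Phi> \<omega> \<inter> cball 0 c = {}} \<in> events"
    by (rule ppp_empty_sets[OF pp]) auto
  have "{\<omega>\<in>space M. zr (\<Phi> \<omega>) \<in> {0..c}} = space M - {\<omega>\<in>space M. \<Phi> \<omega> \<inter> cball 0 c = {}}"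
  proof (intro set_eqI)
    fix \<omega> show "\<omega> \<in> {\<omega>\<in>space M. zr (\<Phi> \<omega>) \<in> {0..c}} \<longleftrightarrow> \<omega> \<in> space M - {\<omega>\<in>space M. \<Phi> \<omega> \<inter> cball 0 c = {}}"
      using zr_cball[OF ppp_lfin[OF pp] c, of \<omega>] by auto
  qed
  then have "emeasure M {\<omega>\<in>space M. zr (\<Phi> \<omega>) \<in> {0..c}} = ennreal (prob (space M - {\<omega>\<in>space M. \<Phi> \<omega> \<inter> cball 0 c = {}}))"
    by (simp add: emeasure_eq_measure)
  also have "\<dots> = ennreal (1 - exp (- (2*pi*(LINT x:{0..c}|lborel. x * q x))))"
    using prob_compl[OF E] void_cball[OF pp qm c] by simp
  finally show ?thesis .
qed

lemma measure_eq_Icc: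
  fixes N1 N2 :: "real measure"
  assumes s1: "sets N1 = sets borel" and s2: "sets N2 = sets borel" and s: "0 \<le> s"
    and sup1: "\<And>A. A \<in> sets borel \<Longrightarrow> emeasure N1 A = emeasure N1 (A \<inter> {0..s})"
    and sup2: "\<And>A. A \<in> sets borel \<Longrightarrow> emeasure N2 A = emeasure N2 (A \<inter> {0..s})"
    and fin: "emeasure N1 {0..s} < \<infinity>"
    and eq: "\<And>c. 0 \<le> c \<Longrightarrow> c \<le> s \<Longrightarrow> emeasure N1 {0..c} = emeasure N2 {0..c}"
  shows "N1 = N2"
proof (rule measure_eqI_lessThan[OF s1 s2])
  fix c :: real
  have "emeasure N1 {c<..} = emeasure N1 ({c<..} \<inter> {0..s})" by (rule sup1) simp
  also have "\<dots> \<le> emeasure N1 {0..s}" by (rule emeasure_mono) (auto simp: s1)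
  finally show "emeasure N1 {c<..} < \<infinity>" using fin by (simp add: le_less_trans)
  have m1: "A \<in> sets N1" "A \<in> sets N2" if "A \<in> sets borel" for A using that s1 s2 by auto
  show "emeasure N1 {c<..} = emeasure N2 {c<..}"
  proof -
    have "emeasure N1 {c<..} = emeasure N1 ({c<..} \<inter> {0..s})" "emeasure N2 {c<..} = emeasure N2 ({c<..} \<inter> {0..s})"
      by (auto intro: sup1 sup2)
    moreover consider "c < 0" | "s \<le> c" | "0 \<le> c" "c < s" by linarith
    then have "emeasure N1 ({c<..} \<inter> {0..s}) = emeasure N2 ({c<..} \<inter> {0..s})"
    proof cases
      case 1 then have "{c<..} \<inter> {0..s} = {0..s}" by auto
      then show ?thesis using eq[of s] s by simp
    next
      case 2 then have "{c<..} \<inter> {0..s} = {}" by auto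
      then show ?thesis by simp
    next
      case 3
      then have e: "{c<..} \<inter> {0..s} = {0..s} - {0..c}" by auto
      have f1: "emeasure N1 {0..c} \<noteq> \<infinity>"
        using emeasure_mono[of "{0..c}" "{0..s}" N1] 3 fin m1 by (auto simp: top_unique)
      have f2: "emeasure N2 {0..c} \<noteq> \<infinity>" using f1 eq[of c] 3 by simp
      have "emeasure N1 ({0..s} - {0..c}) = emeasure N1 {0..s} - emeasure N1 {0..c}"
        using 3 f1 m1 by (intro emeasure_Diff) auto
      moreover have "emeasure N2 ({0..s} - {0..c}) = emeasure N2 {0..s} - emeasure N2 {0..c}"
        using 3 f2 m1 by (intro emeasure_Diff) auto
      ultimately show ?thesis unfolding e using eq[of c] eq[of s] 3 s by simp
    qed
    ultimately show ?thesis by simp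
  qed
qed

lemma law_zr:
  assumes Pr: "prob_space M" and pp: "ppp M \<Phi> (\<lambda>p. q (norm p))" and qm[measurable]: "q \<in> borel_measurable borel"
   and qb: "\<And>x. 0 \<le> x \<Longrightarrow> 0 \<le> q x \<and> q x \<le> Qb" and s: "0 \<le> s"
  defines "g \<equiv> \<lambda>x. 2*pi*(x*q x)"
  defines "G \<equiv> \<lambda>x. LINT y:{0..x}|lborel. g y"
  shows "density (distr M borel (\<lambda>\<omega>. zr (\<Phi> \<omega>))) (indicator {0..s})
     = density lborel (\<lambda>x. indicator {0..s} x * ennreal (g x * exp (- G x)))"
proof -
  interpret prob_space M by fact
  have zm[measurable]: "(\<lambda>\<omega>. zr (\<Phi> \<omega>)) \<in> borel_measurable M" by (rule zr_borel[OF pp])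
  have gm[measurable]: "g \<in> borel_measurable borel" unfolding g_def by measurable
  have Geq: "G c = 2*pi*(LINT x:{0..c}|lborel. x * q x)" for c
    unfolding G_def g_def by simp
  have gb: "0 \<le> g x \<and> g x \<le> 2 * pi * s * Qb" if "x \<in> {0..s}" for x
  proof -
    have "0 \<le> x" "x \<le> s" using that by auto
    moreover have "0 \<le> q x" "q x \<le> Qb" using qb[of x] \<open>0 \<le> x\<close> by auto
    ultimately have "x * q x \<le> s * Qb" by (intro mult_mono) auto
    then show ?thesis unfolding g_def using \<open>0 \<le> x\<close> \<open>0 \<le> q x\<close> by (auto simp: mult.assoc)
  qed
  have contG: "continuous_on {0..s} G"
    unfolding G_def by (rule intG_cont[OF gm s, of "2 * pi * s * Qb"]) (use gb in auto)
  have Gm: "(\<lambda>x. G (max 0 (min s x))) \<in> borel_measurable borel" by (rule meas_clamp[OF contG s])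
  have ieq: "(\<lambda>x. indicator {0..s} x * ennreal (g x * exp (- G x))) = (\<lambda>x. indicator {0..s} x * ennreal (g x * exp (- G (max 0 (min s x)))))"
    by (intro ext) (auto split: split_indicator)
  have fm[measurable]: "(\<lambda>x. indicator {0..s} x * ennreal (g x * exp (- G x))) \<in> borel_measurable borel"
    unfolding ieq using Gm by measurable
  let ?N1 = "density (distr M borel (\<lambda>\<omega>. zr (\<Phi> \<omega>))) (indicator {0..s})"
  let ?N2 = "density lborel (\<lambda>x. indicator {0..s} x * ennreal (g x * exp (- G x)))"
  have N1: "emeasure ?N1 A = emeasure M {\<omega>\<in>space M. zr (\<Phi> \<omega>) \<in> {0..s} \<inter> A}" if [measurable]: "A \<in> sets borel" for A
  proof -
    have "emeasure ?N1 A = emeasure (distr M borel (\<lambda>\<omega>. zr (\<Phi> \<omega>))) ({0..s} \<inter> A)"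
      by (rule emeasure_density_ind) auto
    also have "\<dots> = emeasure M {\<omega>\<in>space M. zr (\<Phi> \<omega>) \<in> {0..s} \<inter> A}"
      by (subst emeasure_distr) (auto simp: vimage_def Int_def conj_commute)
    finally show ?thesis .
  qed
  have N2: "emeasure ?N2 A = (\<integral>\<^sup>+x. indicator ({0..s} \<inter> A) x * ennreal (g x * exp (- G x)) \<partial>lborel)" if [measurable]: "A \<in> sets borel" for A
  proof -
    have "emeasure ?N2 A = (\<integral>\<^sup>+x. indicator {0..s} x * ennreal (g x * exp (- G x)) * indicator A x \<partial>lborel)"
      by (rule emeasure_density) auto
    also have "\<dots> = (\<integral>\<^sup>+x. indicator ({0..s} \<inter> A) x * ennreal (g x * exp (- G x)) \<partial>lborel)"
      by (intro nn_integral_cong) (auto split: split_indicator)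
    finally show ?thesis .
  qed
  show ?thesis
  proof (rule measure_eq_Icc[OF _ _ s])
    show "sets ?N1 = sets borel" "sets ?N2 = sets borel" by auto
    show "emeasure ?N1 A = emeasure ?N1 (A \<inter> {0..s})" if "A \<in> sets borel" for A
      using that by (simp add: N1 Int_assoc Int_commute[of _ "{0..s}"] Int_left_commute)
    show "emeasure ?N2 A = emeasure ?N2 (A \<inter> {0..s})" if "A \<in> sets borel" for A
      using that by (simp add: N2 Int_assoc Int_commute[of _ "{0..s}"] Int_left_commute)
    show "emeasure ?N1 {0..s} < \<infinity>" by (simp add: N1 emeasure_eq_measure)
    fix c assume c: "0 \<le> c" "c \<le> s"
    have "emeasure ?N1 {0..c} = emeasure M {\<omega>\<in>space M. zr (\<Phi> \<omega>) \<in> {0..c}}"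
      using c by (simp add: N1 Int_absorb1)
    also have "\<dots> = ennreal (1 - exp (- G c))"
      unfolding Geq by (rule prob_zr_Icc[OF Pr pp qm c(1)])
    also have "\<dots> = (\<integral>\<^sup>+x. indicator {0..c} x * ennreal (g x * exp (- G x)) \<partial>lborel)"
      unfolding G_def by (rule ftc_exp[OF gm c(1), of "2 * pi * s * Qb", symmetric]) (use gb c in auto)
    also have "\<dots> = emeasure ?N2 {0..c}"
      using c by (simp add: N2 Int_absorb1)
    finally show "emeasure ?N1 {0..c} = emeasure ?N2 {0..c}" .
  qed
qed



lemma powr_mono2_iff: "0 < e \<Longrightarrow> 0 \<le> u \<Longrightarrow> 0 \<le> v \<Longrightarrow> u powr e \<le> v powr e \<longleftrightarrow> u \<le> (v::real)"
  by (meson not_le powr_less_mono2 powr_mono2 less_imp_le)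

lemma powr_cmp:
  fixes a b x y \<alpha> \<beta> :: real
  assumes "a > 0" "b > 0" "x > 0" "y > 0" "\<alpha> > 0" "\<beta> > 0"
  shows "a * y powr (-\<beta>) \<le> b * x powr (-\<alpha>) \<longleftrightarrow> (a/b) powr (1/\<beta>) * x powr (\<alpha>/\<beta>) \<le> y"
proof -
  have "a * y powr (-\<beta>) \<le> b * x powr (-\<alpha>) \<longleftrightarrow> a / y powr \<beta> \<le> b / x powr \<alpha>"
    using assms by (simp add: powr_minus divide_inverse)
  also have "\<dots> \<longleftrightarrow> (a/b) * x powr \<alpha> \<le> y powr \<beta>"
    using assms by (simp add: field_simps)
  also have "\<dots> \<longleftrightarrow> ((a/b) * x powr \<alpha>) powr (1/\<beta>) \<le> (y powr \<beta>) powr (1/\<beta>)"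
    using assms by (intro powr_mono2_iff[symmetric]) auto
  also have "((a/b) * x powr \<alpha>) powr (1/\<beta>) = (a/b) powr (1/\<beta>) * (x powr \<alpha>) powr (1/\<beta>)"
    using assms by (intro powr_mult)
  also have "(x powr \<alpha>) powr (1/\<beta>) = x powr (\<alpha>/\<beta>)" by (simp add: powr_powr)
  also have "(y powr \<beta>) powr (1/\<beta>) = y"
    using assms by (simp add: powr_powr)
  finally show ?thesis .
qed

lemma powr_thr:
  fixes K r B \<gamma> :: real
  assumes "K > 0" "r > 0" "B > 0" "\<gamma> > 0"
  shows "K * r powr \<gamma> \<le> B \<longleftrightarrow> r \<le> (B/K) powr (1/\<gamma>)"
proof -
  have "K * r powr \<gamma> \<le> B \<longleftrightarrow> r powr \<gamma> \<le> B/K" using assms by (simp add: field_simps)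
  also have "\<dots> \<longleftrightarrow> (r powr \<gamma>) powr (1/\<gamma>) \<le> (B/K) powr (1/\<gamma>)"
    using assms by (intro powr_mono2_iff[symmetric]) auto
  also have "(r powr \<gamma>) powr (1/\<gamma>) = r" using assms by (simp add: powr_powr)
  finally show ?thesis .
qed

lemma LINT_00: "(LINT x:{0..0}|lborel. f x) = (0::real)" for f :: "real \<Rightarrow> real"
proof -
  have "AE x in lborel. indicator {0..0} x *\<^sub>R f x = (0::real)"
    using AE_lborel_singleton[of 0] by (rule eventually_mono) (auto split: split_indicator)
  then show ?thesis unfolding set_lebesgue_integral_def by (rule integral_eq_zero_AE)
qed

lemma LINT_lin: "0 \<le> a \<Longrightarrow> (LINT x:{0..a}|lborel. x * c) = c * a^2 / 2" for a c :: real
  unfolding set_lebesgue_integral_def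
  by (subst integral_FTC_atLeastAtMost[where F="\<lambda>x. c * x^2/2"])
     (auto intro!: derivative_eq_intros continuous_intros simp: has_real_derivative_iff_has_vector_derivative[symmetric])



lemma probA:
  fixes X :: "nat \<Rightarrow> 'a \<Rightarrow> real"
  assumes Pr: "prob_space M" and ind: "prob_space.indep_vars M (\<lambda>_. borel) X {0,1,2}"
   and law: "density (distr M borel (X 1)) (indicator {0..s}) = density lborel (\<lambda>x. indicator {0..s} x * ennreal (gE x))"
   and gEm: "(\<lambda>x. indicator {0..s} x * ennreal (gE x)) \<in> borel_measurable borel"
   and S: "{(x,(y,z)). x \<in> {0..s} \<and> y \<in> T x \<and> z \<in> U x} \<in> sets (borel \<Otimes>\<^sub>M (borel \<Otimes>\<^sub>M borel))"
   and TU: "\<And>x. T x \<in> sets borel" "\<And>x. U x \<in> sets borel"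
   and HH: "\<And>x. x \<in> {0..s} \<Longrightarrow> emeasure M {\<omega>\<in>space M. X 0 \<omega> \<in> T x} * emeasure M {\<omega>\<in>space M. X 2 \<omega> \<in> U x} = ennreal (H x)"
   and Hm: "(\<lambda>x. indicator {0..s} x * ennreal (H x)) \<in> borel_measurable borel"
  shows "emeasure M {\<omega>\<in>space M. X 1 \<omega> \<in> {0..s} \<and> X 0 \<omega> \<in> T (X 1 \<omega>) \<and> X 2 \<omega> \<in> U (X 1 \<omega>)}
     = (\<integral>\<^sup>+ x. indicator {0..s} x * ennreal (gE x) * ennreal (H x) \<partial>lborel)"
proof -
  let ?\<mu> = "distr M borel (X 1)"
  have "emeasure M {\<omega>\<in>space M. X 1 \<omega> \<in> {0..s} \<and> X 0 \<omega> \<in> T (X 1 \<omega>) \<and> X 2 \<omega> \<in> U (X 1 \<omega>)}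
     = (\<integral>\<^sup>+ x. indicator {0..s} x * emeasure M {\<omega>\<in>space M. X 0 \<omega> \<in> T x} * emeasure M {\<omega>\<in>space M. X 2 \<omega> \<in> U x} \<partial>?\<mu>)"
    by (rule joint3[OF Pr ind S]) (auto simp: TU)
  also have "\<dots> = (\<integral>\<^sup>+ x. indicator {0..s} x * (indicator {0..s} x * ennreal (H x)) \<partial>?\<mu>)"
  proof (intro nn_integral_cong)
    fix x show "indicator {0..s} x * emeasure M {\<omega>\<in>space M. X 0 \<omega> \<in> T x} * emeasure M {\<omega>\<in>space M. X 2 \<omega> \<in> U x}
       = indicator {0..s} x * (indicator {0..s} x * ennreal (H x))"
      using HH[of x] by (cases "x \<in> {0..s}") (auto simp: mult.assoc)
  qed
  also have "\<dots> = (\<integral>\<^sup>+ x. indicator {0..s} x * ennreal (H x) \<partial>(density ?\<mu> (indicator {0..s})))"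
    by (rule nn_integral_density[symmetric]) (use Hm in auto)
  also have "\<dots> = (\<integral>\<^sup>+ x. indicator {0..s} x * ennreal (gE x) * (indicator {0..s} x * ennreal (H x)) \<partial>lborel)"
    unfolding law by (rule nn_integral_density) (use Hm gEm in auto)
  also have "\<dots> = (\<integral>\<^sup>+ x. indicator {0..s} x * ennreal (gE x) * ennreal (H x) \<partial>lborel)"
    by (intro nn_integral_cong) (auto split: split_indicator)
  finally show ?thesis .
qed

lemma substB:
  fixes F gE H :: "real \<Rightarrow> real"
  assumes h: "h > 0" and s: "0 \<le> s"
   and Fm: "set_borel_measurable borel {h..sqrt (s^2 + h^2)} F"
   and eq: "\<And>x. x \<in> {0..s} \<Longrightarrow> F (sqrt (x^2+h^2)) * (x / sqrt (x^2+h^2)) = gE x * H x"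
   and nn: "\<And>x. x \<in> {0..s} \<Longrightarrow> 0 \<le> gE x \<and> 0 \<le> H x"
  shows "(\<integral>\<^sup>+ x. indicator {0..s} x * ennreal (gE x) * ennreal (H x) \<partial>lborel)
       = (\<integral>\<^sup>+ r. ennreal (F r * indicator {h..sqrt (s^2 + h^2)} r) \<partial>lborel)"
proof -
  let ?\<phi> = "\<lambda>x::real. sqrt (x^2 + h^2)"
  have pos: "0 < x^2 + h^2" for x :: real using h by (simp add: add_nonneg_pos)
  have "(\<integral>\<^sup>+x. F x * indicator {?\<phi> 0..?\<phi> s} x \<partial>lborel) = (\<integral>\<^sup>+x. F (?\<phi> x) * (x / ?\<phi> x) * indicator {0..s} x \<partial>lborel)"
  proof (rule nn_integral_substitution)
    show "set_borel_measurable borel {?\<phi> 0..?\<phi> s} F" using Fm h by simp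
    fix x :: real
    show "(?\<phi> has_real_derivative x / ?\<phi> x) (at x)"
      using pos[of x] by (auto intro!: derivative_eq_intros simp: field_simps)
    show "x \<in> {0..s} \<Longrightarrow> 0 \<le> x / ?\<phi> x" by auto
  next
    show "continuous_on {0..s} (\<lambda>x. x / ?\<phi> x)"
      using pos by (intro continuous_intros) (auto simp: less_imp_neq[symmetric])
  qed (use s in auto)
  also have "\<dots> = (\<integral>\<^sup>+ x. indicator {0..s} x * ennreal (gE x) * ennreal (H x) \<partial>lborel)"
  proof (intro nn_integral_cong)
    fix x show "ennreal (F (?\<phi> x) * (x / ?\<phi> x) * indicator {0..s} x) = indicator {0..s} x * ennreal (gE x) * ennreal (H x)"
      using eq[of x] nn[of x] by (cases "x \<in> {0..s}") (auto simp: ennreal_mult[symmetric])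
  qed
  finally show ?thesis using h by simp
qed

lemma measure_LINT:
  fixes F S :: "real \<Rightarrow> real"
  assumes E: "emeasure M E = (\<integral>\<^sup>+ r. ennreal (F r * indicator {h..t} r) \<partial>lborel)"
   and eqS: "\<And>r. r \<in> {h..t} \<Longrightarrow> S r = F r" and nn: "\<And>r. r \<in> {h..t} \<Longrightarrow> 0 \<le> F r"
   and Sm: "(\<lambda>r. indicator {h..t} r *\<^sub>R S r) \<in> borel_measurable borel"
  shows "measure M E = (LINT r:{h..t}|lborel. S r)"
proof -
  have "(LINT r:{h..t}|lborel. S r) = enn2real (\<integral>\<^sup>+ r. ennreal (indicator {h..t} r *\<^sub>R S r) \<partial>lborel)"
    unfolding set_lebesgue_integral_def
    by (rule integral_eq_nn_integral) (use Sm in \<open>auto simp: eqS nn split: split_indicator\<close>)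
  also have "(\<integral>\<^sup>+ r. ennreal (indicator {h..t} r *\<^sub>R S r) \<partial>lborel) = (\<integral>\<^sup>+ r. ennreal (F r * indicator {h..t} r) \<partial>lborel)"
    by (intro nn_integral_cong) (auto simp: eqS split: split_indicator)
  finally show ?thesis using E by (simp add: measure_def)
qed



lemma le_sqrt_iff: "0 \<le> n \<Longrightarrow> 0 \<le> y \<Longrightarrow> n \<le> sqrt y \<longleftrightarrow> n^2 \<le> (y::real)"
  by (metis real_sqrt_abs abs_of_nonneg real_sqrt_le_iff)

lemma sqrt_le_iff': "0 \<le> t \<Longrightarrow> sqrt y \<le> t \<longleftrightarrow> y \<le> (t::real)^2"
  by (metis real_sqrt_abs abs_of_nonneg real_sqrt_le_iff)

lemma dist3_eq: "S \<noteq> {} \<Longrightarrow> dist3 h S = sqrt ((zr S)^2 + h^2)"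
  by (simp add: dist3_def zr_def)

lemma dist3_pos: "h > 0 \<Longrightarrow> dist3 h S > 0"
  unfolding dist3_def by (simp add: add_nonneg_pos)

lemma dist3_ge: "h > 0 \<Longrightarrow> dist3 h S \<ge> h"
  unfolding dist3_def using real_sqrt_le_mono[of "h^2" "(nearest S)^2 + h^2"] by simp

lemma L_part:
  assumes h: "h > 0" and t: "h \<le> t"
  shows "(SL \<noteq> {} \<and> dist3 h SL \<le> t) \<longleftrightarrow> zr SL \<in> {0..sqrt (t^2 - h^2)}"
proof (cases "SL = {}")
  case True then show ?thesis by (simp add: zr_def)
next
  case False
  have n0: "0 \<le> zr SL" using False nearest_ge0 by (simp add: zr_def)
  have th: "0 \<le> t^2 - h^2" using h t by (simp add: power_mono)
  have "dist3 h SL \<le> t \<longleftrightarrow> (zr SL)^2 + h^2 \<le> t^2"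
    unfolding dist3_eq[OF False] using h t by (intro sqrt_le_iff') auto
  also have "\<dots> \<longleftrightarrow> zr SL \<le> sqrt (t^2 - h^2)" using le_sqrt_iff[OF n0 th] by linarith
  finally show ?thesis using False n0 by auto
qed

lemma T_part1: "(\<not> (ST \<noteq> {} \<and> nearest ST \<le> RB)) \<longleftrightarrow> zr ST \<in> UNIV - {0..RB}"
  using nearest_ge0[of ST] by (auto simp: zr_def)

definition tauN :: "real \<Rightarrow> real \<Rightarrow> real \<Rightarrow> real \<Rightarrow> real \<Rightarrow> real \<Rightarrow> real" where
  "tauN h \<eta>N \<eta>L \<alpha>N \<alpha>L r = max h ((\<eta>N / \<eta>L) powr (1 / \<alpha>N) * r powr (\<alpha>L / \<alpha>N))"

lemma tauN_ge: "h \<le> tauN h \<eta>N \<eta>L \<alpha>N \<alpha>L r" by (simp add: tauN_def)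

lemma N_part:
  assumes h: "h > 0" and pos: "\<eta>N > 0" "\<eta>L > 0" "\<alpha>N > 0" "\<alpha>L > 0" and d: "d > 0"
  shows "(\<eta>N * dist3 h SN powr (- \<alpha>N) \<le> \<eta>L * d powr (- \<alpha>L) \<or> SN = {})
     \<longleftrightarrow> zr SN \<in> UNIV - {0..<sqrt ((tauN h \<eta>N \<eta>L \<alpha>N \<alpha>L d)^2 - h^2)}"
proof (cases "SN = {}")
  case True then show ?thesis by (simp add: zr_def)
next
  case False
  let ?K = "(\<eta>N / \<eta>L) powr (1 / \<alpha>N) * d powr (\<alpha>L / \<alpha>N)"
  let ?\<tau> = "tauN h \<eta>N \<eta>L \<alpha>N \<alpha>L d"
  have n0: "0 \<le> zr SN" using False nearest_ge0 by (simp add: zr_def)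
  have dN: "dist3 h SN = sqrt ((zr SN)^2 + h^2)" using dist3_eq[OF False] .
  have dpos: "dist3 h SN > 0" using dist3_pos[OF h] .
  have dge: "dist3 h SN \<ge> h" using dist3_ge[OF h] .
  have "\<eta>N * dist3 h SN powr (- \<alpha>N) \<le> \<eta>L * d powr (- \<alpha>L) \<longleftrightarrow> ?K \<le> dist3 h SN"
    using powr_cmp[of \<eta>N \<eta>L d "dist3 h SN" \<alpha>L \<alpha>N] pos d dpos by simp
  also have "\<dots> \<longleftrightarrow> ?\<tau> \<le> dist3 h SN" using dge by (simp add: tauN_def)
  also have "\<dots> \<longleftrightarrow> ?\<tau>^2 \<le> (zr SN)^2 + h^2"
    unfolding dN using h tauN_ge[of h \<eta>N \<eta>L \<alpha>N \<alpha>L d]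
    by (subst le_sqrt_iff) (auto intro: add_nonneg_nonneg)
  also have "\<dots> \<longleftrightarrow> sqrt (?\<tau>^2 - h^2) \<le> zr SN"
    using n0 h tauN_ge[of h \<eta>N \<eta>L \<alpha>N \<alpha>L d] by (subst sqrt_le_iff') (auto simp: power_mono)
  finally show ?thesis using False n0 by auto
qed

lemma T_part2:
  assumes pos: "\<eta>T > 0" "\<eta>L > 0" "\<alpha>T > 0" "\<alpha>L > 0" and d: "d > 0" and ne: "ST \<noteq> {}" and np: "nearest ST > 0"
  shows "(\<eta>T * nearest ST powr (- \<alpha>T) \<le> \<eta>L * d powr (- \<alpha>L))
     \<longleftrightarrow> (\<eta>T / \<eta>L) powr (1 / \<alpha>T) * d powr (\<alpha>L / \<alpha>T) \<le> zr ST"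
  using powr_cmp[of \<eta>T \<eta>L d "nearest ST" \<alpha>L \<alpha>T] pos d np ne by (simp add: zr_def)



lemma emeas_void_cball:
  assumes Pr: "prob_space M" and pp: "ppp M \<Phi> (\<lambda>p. q (norm p))" and qm[measurable]: "q \<in> borel_measurable borel" and c: "0 \<le> c"
  shows "emeasure M {\<omega>\<in>space M. zr (\<Phi> \<omega>) \<in> UNIV - {0..c}} = ennreal (exp (- (2*pi*(LINT x:{0..c}|lborel. x * q x))))"
proof -
  interpret prob_space M by fact
  have "{\<omega>\<in>space M. zr (\<Phi> \<omega>) \<in> UNIV - {0..c}} = {\<omega>\<in>space M. \<Phi> \<omega> \<inter> cball 0 c = {}}"
  proof (intro set_eqI)
    fix \<omega> show "\<omega> \<in> {\<omega>\<in>space M. zr (\<Phi> \<omega>) \<in> UNIV - {0..c}} \<longleftrightarrow> \<omega> \<in> {\<omega>\<in>space M. \<Phi> \<omega> \<inter> cball 0 c = {}}"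
      using zr_cball[OF ppp_lfin[OF pp] c, of \<omega>] by auto
  qed
  then show ?thesis using void_cball[OF pp qm c] by (simp add: emeasure_eq_measure)
qed

lemma emeas_void_ball:
  assumes Pr: "prob_space M" and pp: "ppp M \<Phi> (\<lambda>p. q (norm p))" and qm[measurable]: "q \<in> borel_measurable borel" and a: "0 \<le> a"
  shows "emeasure M {\<omega>\<in>space M. zr (\<Phi> \<omega>) \<in> UNIV - {0..<a}} = ennreal (exp (- (2*pi*(LINT x:{0..a}|lborel. x * q x))))"
proof -
  interpret prob_space M by fact
  have "{\<omega>\<in>space M. zr (\<Phi> \<omega>) \<in> UNIV - {0..<a}} = {\<omega>\<in>space M. \<Phi> \<omega> \<inter> ball 0 a = {}}"
  proof (intro set_eqI)
    fix \<omega> show "\<omega> \<in> {\<omega>\<in>space M. zr (\<Phi> \<omega>) \<in> UNIV - {0..<a}} \<longleftrightarrow> \<omega> \<in> {\<omega>\<in>space M. \<Phi> \<omega> \<inter> ball 0 a = {}}"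
      using zr_ball[of "\<Phi> \<omega>" a] by auto
  qed
  then show ?thesis using void_ball[OF pp qm a] by (simp add: emeasure_eq_measure)
qed

lemma emeas_T2:
  assumes Pr: "prob_space M" and pp: "ppp M \<Phi> (\<lambda>p. q (norm p))" and qm[measurable]: "q \<in> borel_measurable borel"
    and \<tau>: "0 < \<tau>" and R: "0 < R"
  shows "emeasure M {\<omega>\<in>space M. zr (\<Phi> \<omega>) \<in> {\<tau>..R}} = ennreal (if \<tau> \<le> R then exp (- (2*pi*(LINT x:{0..\<tau>}|lborel. x * q x))) - exp (- (2*pi*(LINT x:{0..R}|lborel. x * q x))) else 0)"
proof (cases "\<tau> \<le> R")
  case False then show ?thesis by simp
next
  case True
  interpret prob_space M by fact
  let ?A = "{\<omega>\<in>space M. zr (\<Phi> \<omega>) \<in> UNIV - {0..<\<tau>}}" and ?B = "{\<omega>\<in>space M. zr (\<Phi> \<omega>) \<in> UNIV - {0..R}}"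
  have zm: "(\<lambda>\<omega>. zr (\<Phi> \<omega>)) \<in> borel_measurable M" by (rule zr_borel[OF pp])
  have Am: "?A \<in> events" using zm by measurable
  have Bm: "?B \<in> events" using zm by measurable
  have eq: "{\<omega>\<in>space M. zr (\<Phi> \<omega>) \<in> {\<tau>..R}} = ?A - ?B" using \<tau> by auto
  have sub: "?B \<subseteq> ?A" using True by auto
  have "emeasure M (?A - ?B) = ennreal (prob ?A - prob ?B)"
    using finite_measure_Diff[OF Am Bm sub] by (simp add: emeasure_eq_measure)
  moreover have "emeasure M ?A = ennreal (exp (- (2*pi*(LINT x:{0..\<tau>}|lborel. x * q x))))"
    using emeas_void_ball[OF Pr pp qm] \<tau> by simp
  moreover have "emeasure M ?B = ennreal (exp (- (2*pi*(LINT x:{0..R}|lborel. x * q x))))"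
    using emeas_void_cball[OF Pr pp qm] R by simp
  ultimately show ?thesis unfolding eq using True by (simp add: emeasure_eq_measure)
qed

lemma thr_eq:
  fixes a b B \<alpha> \<beta> :: real
  assumes "a > 0" "b > 0" "B > 0" "\<alpha> > 0" "\<beta> > 0"
  shows "(B / (a/b) powr (1/\<beta>)) powr (1/(\<alpha>/\<beta>)) = (b/a) powr (1/\<alpha>) * B powr (\<beta>/\<alpha>)"
proof -
  have "(B / (a/b) powr (1/\<beta>)) powr (1/(\<alpha>/\<beta>)) = B powr (\<beta>/\<alpha>) / ((a/b) powr (1/\<beta>)) powr (\<beta>/\<alpha>)"
    using assms by (simp add: powr_divide powr_mult)
  also have "((a/b) powr (1/\<beta>)) powr (\<beta>/\<alpha>) = (a/b) powr (1/\<alpha>)"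
    using assms by (simp add: powr_powr)
  also have "(a/b) powr (1/\<alpha>) = a powr (1/\<alpha>) / b powr (1/\<alpha>)"
    using assms by (simp add: powr_divide)
  finally have e: "(B / (a/b) powr (1/\<beta>)) powr (1/(\<alpha>/\<beta>)) = B powr (\<beta>/\<alpha>) / (a powr (1/\<alpha>) / b powr (1/\<alpha>))" .
  have "(b/a) powr (1/\<alpha>) = b powr (1/\<alpha>) / a powr (1/\<alpha>)"
    using assms by (simp add: powr_divide)
  then show ?thesis unfolding e using assms by (simp add: field_simps)
qed

lemma law_meas:
  assumes qm[measurable]: "q \<in> borel_measurable borel"
   and qb: "\<And>x. 0 \<le> x \<Longrightarrow> 0 \<le> q x \<and> q x \<le> Qb" and s: "0 \<le> s"
  shows "(\<lambda>x. indicator {0..s} x * ennreal (2*pi*(x*q x) * exp (- (LINT y:{0..x}|lborel. 2*pi*(y*q y))))) \<in> borel_measurable borel"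
proof -
  define g where "g = (\<lambda>x. 2*pi*(x*q x))"
  define G where "G = (\<lambda>x. LINT y:{0..x}|lborel. g y)"
  have gm[measurable]: "g \<in> borel_measurable borel" unfolding g_def by measurable
  have gb: "0 \<le> g x \<and> g x \<le> 2 * pi * s * Qb" if "x \<in> {0..s}" for x
  proof -
    have "0 \<le> x" "x \<le> s" using that by auto
    moreover have "0 \<le> q x" "q x \<le> Qb" using qb[of x] \<open>0 \<le> x\<close> by auto
    ultimately have "x * q x \<le> s * Qb" by (intro mult_mono) auto
    then show ?thesis unfolding g_def using \<open>0 \<le> x\<close> \<open>0 \<le> q x\<close> by (auto simp: mult.assoc)
  qed
  have contG: "continuous_on {0..s} G"
    unfolding G_def by (rule intG_cont[OF gm s, of "2 * pi * s * Qb"]) (use gb in auto)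
  have Gm: "(\<lambda>x. G (max 0 (min s x))) \<in> borel_measurable borel" by (rule meas_clamp[OF contG s])
  have ieq: "(\<lambda>x. indicator {0..s} x * ennreal (g x * exp (- G x))) = (\<lambda>x. indicator {0..s} x * ennreal (g x * exp (- G (max 0 (min s x)))))"
    by (intro ext) (auto split: split_indicator)
  have "(\<lambda>x. indicator {0..s} x * ennreal (g x * exp (- G x))) \<in> borel_measurable borel"
    unfolding ieq using Gm by measurable
  then show ?thesis unfolding g_def G_def .
qed



lemma rxN_iff:
  assumes h: "h > 0" and pos: "\<eta>N > 0" "\<eta>L > 0" "\<alpha>N > 0" "\<alpha>L > 0" and d: "d > 0"
  shows "(rx_A \<eta>N \<alpha>N h SN \<le> \<eta>L * d powr (- \<alpha>L))
     \<longleftrightarrow> zr SN \<in> UNIV - {0..<sqrt ((tauN h \<eta>N \<eta>L \<alpha>N \<alpha>L d)^2 - h^2)}"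
proof -
  have "(rx_A \<eta>N \<alpha>N h SN \<le> \<eta>L * d powr (- \<alpha>L)) \<longleftrightarrow> (\<eta>N * dist3 h SN powr (- \<alpha>N) \<le> \<eta>L * d powr (- \<alpha>L) \<or> SN = {})"
    using pos d by (auto simp: rx_A_def)
  also have "\<dots> \<longleftrightarrow> zr SN \<in> UNIV - {0..<sqrt ((tauN h \<eta>N \<eta>L \<alpha>N \<alpha>L d)^2 - h^2)}"
    by (rule N_part[OF h pos d])
  finally show ?thesis .
qed

lemma ev1:
  assumes h: "h > 0" and t: "h \<le> t" and pos: "\<eta>T > 0" "\<eta>L > 0" "\<eta>N > 0" "\<alpha>T > 0" "\<alpha>L > 0" "\<alpha>N > 0"
  shows "(dist3 h SL \<le> t \<and> \<not> (ST \<noteq> {} \<and> nearest ST \<le> RB) \<and> assoc_LoS h RB \<alpha>T \<alpha>L \<alpha>N \<eta>T \<eta>L \<eta>N ST SL SN)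
     \<longleftrightarrow> (zr SL \<in> {0..sqrt (t^2 - h^2)} \<and> zr ST \<in> UNIV - {0..RB}
        \<and> zr SN \<in> UNIV - {0..<sqrt ((tauN h \<eta>N \<eta>L \<alpha>N \<alpha>L (sqrt ((zr SL)^2 + h^2)))^2 - h^2)})"
proof (cases "SL = {}")
  case True then show ?thesis by (simp add: assoc_LoS_def zr_def)
next
  case False
  let ?d = "dist3 h SL"
  have deq: "?d = sqrt ((zr SL)^2 + h^2)" by (rule dist3_eq[OF False])
  have dpos: "?d > 0" by (rule dist3_pos[OF h])
  have rxL: "rx_A \<eta>L \<alpha>L h SL = \<eta>L * ?d powr (- \<alpha>L)" using False by (simp add: rx_A_def)
  have rxLpos: "0 < \<eta>L * ?d powr (- \<alpha>L)" using pos dpos by simp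
  have L: "?d \<le> t \<longleftrightarrow> zr SL \<in> {0..sqrt (t^2 - h^2)}" using L_part[OF h t, of SL] False by simp
  have T: "\<not> (ST \<noteq> {} \<and> nearest ST \<le> RB) \<longleftrightarrow> zr ST \<in> UNIV - {0..RB}" by (rule T_part1)
  have T0: "\<not> (ST \<noteq> {} \<and> nearest ST \<le> RB) \<Longrightarrow> rx_T \<eta>T \<alpha>T RB ST = 0" unfolding rx_T_def by auto
  have N: "(rx_A \<eta>N \<alpha>N h SN \<le> \<eta>L * ?d powr (- \<alpha>L)) \<longleftrightarrow> zr SN \<in> UNIV - {0..<sqrt ((tauN h \<eta>N \<eta>L \<alpha>N \<alpha>L ?d)^2 - h^2)}"
    by (rule rxN_iff[OF h pos(3,2,6,5) dpos])
  show ?thesis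
    unfolding assoc_LoS_def rxL using L T T0 N rxLpos False deq by auto
qed

lemma ev2:
  assumes RB: "RB > 0" and h: "h > 0" and t: "h \<le> t" and pos: "\<eta>T > 0" "\<eta>L > 0" "\<eta>N > 0" "\<alpha>T > 0" "\<alpha>L > 0" "\<alpha>N > 0"
  defines "tT \<equiv> \<lambda>r. (\<eta>T / \<eta>L) powr (1 / \<alpha>T) * r powr (\<alpha>L / \<alpha>T)"
  shows "(dist3 h SL \<le> t \<and> (ST \<noteq> {} \<and> nearest ST \<le> RB) \<and> assoc_LoS h RB \<alpha>T \<alpha>L \<alpha>N \<eta>T \<eta>L \<eta>N ST SL SN)
     \<longleftrightarrow> ((zr SL \<in> {0..sqrt (t^2 - h^2)} \<and> zr ST \<in> {tT (sqrt ((zr SL)^2 + h^2))..RB}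
        \<and> zr SN \<in> UNIV - {0..<sqrt ((tauN h \<eta>N \<eta>L \<alpha>N \<alpha>L (sqrt ((zr SL)^2 + h^2)))^2 - h^2)})
      \<or> (zr ST = 0 \<and> zr SL \<in> {0..sqrt (t^2 - h^2)}
        \<and> zr SN \<in> UNIV - {0..<sqrt ((tauN h \<eta>N \<eta>L \<alpha>N \<alpha>L (sqrt ((zr SL)^2 + h^2)))^2 - h^2)}))"
proof (cases "SL = {}")
  case True then show ?thesis by (simp add: assoc_LoS_def zr_def)
next
  case False
  let ?d = "dist3 h SL"
  have deq: "?d = sqrt ((zr SL)^2 + h^2)" by (rule dist3_eq[OF False])
  have dpos: "?d > 0" by (rule dist3_pos[OF h])
  have tTpos: "tT ?d > 0" using pos dpos by (simp add: tT_def)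
  have rxL: "rx_A \<eta>L \<alpha>L h SL = \<eta>L * ?d powr (- \<alpha>L)" using False by (simp add: rx_A_def)
  have rxLpos: "0 < \<eta>L * ?d powr (- \<alpha>L)" using pos dpos by simp
  have L: "?d \<le> t \<longleftrightarrow> zr SL \<in> {0..sqrt (t^2 - h^2)}" using L_part[OF h t, of SL] False by simp
  have N: "(rx_A \<eta>N \<alpha>N h SN \<le> \<eta>L * ?d powr (- \<alpha>L)) \<longleftrightarrow> zr SN \<in> UNIV - {0..<sqrt ((tauN h \<eta>N \<eta>L \<alpha>N \<alpha>L ?d)^2 - h^2)}"
    by (rule rxN_iff[OF h pos(3,2,6,5) dpos])
  have T: "(ST \<noteq> {} \<and> nearest ST \<le> RB \<and> rx_T \<eta>T \<alpha>T RB ST \<le> \<eta>L * ?d powr (- \<alpha>L))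
     \<longleftrightarrow> (zr ST \<in> {tT ?d..RB} \<or> zr ST = 0)"
  proof (cases "ST = {}")
    case True then show ?thesis using tTpos by (simp add: zr_def)
  next
    case STne: False
    have n0: "nearest ST \<ge> 0" by (rule nearest_ge0[OF STne])
    show ?thesis
    proof (cases "nearest ST = 0")
      case True then show ?thesis using STne rxLpos pos RB by (simp add: zr_def rx_T_def)
    next
      case False
      then have np: "nearest ST > 0" using n0 by simp
      have "nearest ST \<le> RB \<Longrightarrow> rx_T \<eta>T \<alpha>T RB ST = \<eta>T * nearest ST powr (- \<alpha>T)"
        using STne by (simp add: rx_T_def)
      moreover have "(\<eta>T * nearest ST powr (- \<alpha>T) \<le> \<eta>L * ?d powr (- \<alpha>L)) \<longleftrightarrow> tT ?d \<le> zr ST"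
        unfolding tT_def by (rule T_part2[OF pos(1,2,4,5) dpos STne np])
      ultimately show ?thesis using STne False np by (auto simp: zr_def)
    qed
  qed
  show ?thesis
    unfolding assoc_LoS_def rxL using L T N rxLpos False deq tTpos by auto
qed



theorem lemma7:
  fixes M :: "'a measure"
    and \<Phi>T \<Phi>L \<Phi>N :: "'a \<Rightarrow> (real \<times> real) set"
    and P_L :: "real \<Rightarrow> real"
    and lamT lamA h RB \<alpha>T \<alpha>L \<alpha>N \<eta>T \<eta>L \<eta>N :: real
  assumes M: "prob_space M"
    and pos: "lamT > 0" "lamA > 0" "h > 0" "RB > 0" "\<alpha>T > 0" "\<alpha>L > 0" "\<alpha>N > 0"
             "\<eta>T > 0" "\<eta>L > 0" "\<eta>N > 0"
    and PL_meas: "P_L \<in> borel_measurable borel"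
    and PL_range: "\<forall>x\<ge>0. 0 \<le> P_L x \<and> P_L x \<le> 1"
    and T_ppp: "ppp M \<Phi>T (\<lambda>_. lamT)"
    and L_ppp: "ppp M \<Phi>L (\<lambda>p. lamA * P_L (norm p))"
    and N_ppp: "ppp M \<Phi>N (\<lambda>p. lamA * (1 - P_L (norm p)))"
    and indep: "indep_pps M (\<lambda>i. if i = 0 then \<Phi>T else if i = 1 then \<Phi>L else \<Phi>N) {0, 1, 2}"
  defines "AL \<equiv> measure M {\<omega> \<in> space M. assoc_LoS h RB \<alpha>T \<alpha>L \<alpha>N \<eta>T \<eta>L \<eta>N (\<Phi>T \<omega>) (\<Phi>L \<omega>) (\<Phi>N \<omega>)}"
    and "QT \<equiv> 1 - exp (- pi * lamT * RB\<^sup>2)"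
    and "lLh \<equiv> (\<eta>L / \<eta>N) powr (1 / \<alpha>L) * h powr (\<alpha>N / \<alpha>L)"
    and "lLT \<equiv> (\<eta>L / \<eta>T) powr (1 / \<alpha>L) * RB powr (\<alpha>T / \<alpha>L)"
    and "tauNL \<equiv> \<lambda>r. max h ((\<eta>N / \<eta>L) powr (1 / \<alpha>N) * r powr (\<alpha>L / \<alpha>N))"
    and "tauTL \<equiv> \<lambda>r. (\<eta>T / \<eta>L) powr (1 / \<alpha>T) * r powr (\<alpha>L / \<alpha>T)"
  assumes AL_pos: "AL > 0"
  shows "\<forall>t\<ge>h.
           measure M {\<omega> \<in> space M. dist3 h (\<Phi>L \<omega>) \<le> t
                \<and> \<not> (\<Phi>T \<omega> \<noteq> {} \<and> nearest (\<Phi>T \<omega>) \<le> RB)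
                \<and> assoc_LoS h RB \<alpha>T \<alpha>L \<alpha>N \<eta>T \<eta>L \<eta>N (\<Phi>T \<omega>) (\<Phi>L \<omega>) (\<Phi>N \<omega>)}
             = (LINT r:{h..t}|lborel. AL *
                  (if r \<le> lLh then f_RL0 lamA h P_L r / AL * (1 - QT)
                   else f_RL0 lamA h P_L r / AL * (1 - QT)
                        * exp (- 2 * pi * lamA *
                            (LINT x:{0..sqrt ((tauNL r)\<^sup>2 - h\<^sup>2)}|lborel. x * (1 - P_L x)))))
         \<and> measure M {\<omega> \<in> space M. dist3 h (\<Phi>L \<omega>) \<le> t
                \<and> (\<Phi>T \<omega> \<noteq> {} \<and> nearest (\<Phi>T \<omega>) \<le> RB)
                \<and> assoc_LoS h RB \<alpha>T \<alpha>L \<alpha>N \<eta>T \<eta>L \<eta>N (\<Phi>T \<omega>) (\<Phi>L \<omega>) (\<Phi>N \<omega>)}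
             = (LINT r:{h..t}|lborel. AL *
                  (if r > lLT then 0
                   else if lLh > lLT \<or> r \<le> lLh
                     then f_RL0 lamA h P_L r / AL * (exp (- pi * lamT * (tauTL r)\<^sup>2) - (1 - QT))
                   else f_RL0 lamA h P_L r / AL * (exp (- pi * lamT * (tauTL r)\<^sup>2) - (1 - QT))
                        * exp (- 2 * pi * lamA *
                            (LINT x:{0..sqrt ((tauNL r)\<^sup>2 - h\<^sup>2)}|lborel. x * (1 - P_L x)))))"
  proof -
  interpret prob_space M by (rule M)
  note PLm[measurable] = PL_meas
  have lamT: "lamT > 0" and lamA: "lamA > 0" and h0: "h > 0" and RB0: "RB > 0" using pos by auto
  define \<Phi>s where "\<Phi>s = (\<lambda>i::nat. if i = 0 then \<Phi>T else if i = 1 then \<Phi>L else \<Phi>N)"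
  define X where "X = (\<lambda>i \<omega>. zr (\<Phi>s i \<omega>))"
  define qT :: "real \<Rightarrow> real" where "qT = (\<lambda>_. lamT)"
  define qL :: "real \<Rightarrow> real" where "qL = (\<lambda>x. lamA * P_L x)"
  define qN :: "real \<Rightarrow> real" where "qN = (\<lambda>x. lamA * (1 - P_L x))"
  have ppT: "ppp M \<Phi>T (\<lambda>p. qT (norm p))" using T_ppp by (simp add: qT_def)
  have ppL: "ppp M \<Phi>L (\<lambda>p. qL (norm p))" using L_ppp by (simp add: qL_def)
  have ppN: "ppp M \<Phi>N (\<lambda>p. qN (norm p))" using N_ppp by (simp add: qN_def)
  have qTm[measurable]: "qT \<in> borel_measurable borel" by (simp add: qT_def)
  have qLm[measurable]: "qL \<in> borel_measurable borel" unfolding qL_def by measurable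
  have qNm[measurable]: "qN \<in> borel_measurable borel" unfolding qN_def by measurable
  have qLb: "0 \<le> qL x \<and> qL x \<le> lamA" if "0 \<le> x" for x using PL_range that lamA by (auto simp: qL_def)
  have pp: "\<exists>\<rho>. ppp M (\<Phi>s i) \<rho>" if "i \<in> {0,1,2}" for i using T_ppp L_ppp N_ppp that by (auto simp: \<Phi>s_def)
  have ind: "indep_vars (\<lambda>_. borel) X {0,1,2}"
    unfolding X_def by (rule indep_Z[OF M pp]) (use indep in \<open>simp_all add: \<Phi>s_def\<close>)
  have X0: "X 0 = (\<lambda>\<omega>. zr (\<Phi>T \<omega>))" and X1: "X 1 = (\<lambda>\<omega>. zr (\<Phi>L \<omega>))" and X2: "X 2 = (\<lambda>\<omega>. zr (\<Phi>N \<omega>))"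
    by (auto simp: X_def \<Phi>s_def)
  have X0m[measurable]: "X 0 \<in> borel_measurable M" unfolding X0 by (rule zr_borel[OF ppT])
  have X1m[measurable]: "X 1 \<in> borel_measurable M" unfolding X1 by (rule zr_borel[OF ppL])
  have X2m[measurable]: "X 2 \<in> borel_measurable M" unfolding X2 by (rule zr_borel[OF ppN])
  have AL0: "AL \<noteq> 0" using AL_pos by simp
  have QT1: "1 - QT = exp (- pi * lamT * RB^2)" by (simp add: QT_def)
  define IL where "IL u = (LINT x:{0..u}|lborel. x * P_L x)" for u
  define IN where "IN u = (LINT x:{0..u}|lborel. x * (1 - P_L x))" for u
  define phi where "phi x = sqrt (x^2 + h^2)" for x :: real
  define aN where "aN r = sqrt ((tauNL r)^2 - h^2)" for r
  define NF where "NF r = exp (- 2 * pi * lamA * IN (aN r))" for r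
  have tauNL_eq: "tauNL r = tauN h \<eta>N \<eta>L \<alpha>N \<alpha>L r" for r by (simp add: tauNL_def tauN_def)
  have fR: "f_RL0 lamA h P_L r = 2 * pi * lamA * r * P_L (sqrt (r^2 - h^2)) * exp (- 2 * pi * lamA * IL (sqrt (r^2 - h^2)))" for r
    by (simp add: f_RL0_def IL_def)
  define gL where "gL x = 2*pi*(x * qL x)" for x
  define GL where "GL x = (LINT y:{0..x}|lborel. gL y)" for x
  have GL_eq: "GL x = 2*pi*lamA * IL x" for x
  proof -
    have "gL = (\<lambda>y. (2*pi*lamA) * (y * P_L y))" by (auto simp: gL_def qL_def fun_eq_iff)
    then show ?thesis unfolding GL_def IL_def by (simp only: set_integral_mult_right)
  qed
  have INq: "(LINT x:{0..a}|lborel. x * qN x) = lamA * IN a" for a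
  proof -
    have "(\<lambda>x. x * qN x) = (\<lambda>x. lamA * (x * (1 - P_L x)))" by (auto simp: qN_def fun_eq_iff)
    then show ?thesis unfolding IN_def by (simp only: set_integral_mult_right)
  qed
  have ITq: "(LINT x:{0..a}|lborel. x * qT x) = lamT * a^2 / 2" if "0 \<le> a" for a
    unfolding qT_def using LINT_lin[OF that] by simp
  have NFv: "emeasure M {\<omega>\<in>space M. X 2 \<omega> \<in> UNIV - {0..<aN r}} = ennreal (NF r)" for r
  proof -
    have "h \<le> tauNL r" by (simp add: tauNL_def)
    then have "h^2 \<le> (tauNL r)^2" using h0 by (intro power_mono) auto
    then have "0 \<le> aN r" by (simp add: aN_def)
    then show ?thesis unfolding X2 NF_def using emeas_void_ball[OF M ppN qNm] by (simp add: INq algebra_simps)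
  qed
  have TF1: "emeasure M {\<omega>\<in>space M. X 0 \<omega> \<in> UNIV - {0..RB}} = ennreal (1 - QT)"
    unfolding X0 QT1 using emeas_void_cball[OF M ppT qTm, of RB] RB0 by (simp add: ITq algebra_simps)
  have TF2: "emeasure M {\<omega>\<in>space M. X 0 \<omega> \<in> {\<tau>..RB}} = ennreal (if \<tau> \<le> RB then exp (- pi * lamT * \<tau>^2) - (1 - QT) else 0)"
    if "0 < \<tau>" for \<tau>
    unfolding X0 QT1 using emeas_void_cball emeas_T2[OF M ppT qTm that RB0] RB0 that by (simp add: ITq algebra_simps)
  have thrN: "(\<eta>N / \<eta>L) powr (1 / \<alpha>N) * r powr (\<alpha>L / \<alpha>N) \<le> h" if "0 < r" "r \<le> lLh" for r
  proof -
    have "(\<eta>N / \<eta>L) powr (1 / \<alpha>N) * r powr (\<alpha>L / \<alpha>N) \<le> h \<longleftrightarrow> r \<le> (h / (\<eta>N / \<eta>L) powr (1 / \<alpha>N)) powr (1 / (\<alpha>L / \<alpha>N))"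
      using pos that by (intro powr_thr) auto
    also have "(h / (\<eta>N / \<eta>L) powr (1 / \<alpha>N)) powr (1 / (\<alpha>L / \<alpha>N)) = lLh"
      unfolding lLh_def using pos by (intro thr_eq) auto
    finally show ?thesis using that by simp
  qed
  have thrT: "tauTL r \<le> RB \<longleftrightarrow> r \<le> lLT" if "0 < r" for r
  proof -
    have "tauTL r \<le> RB \<longleftrightarrow> r \<le> (RB / (\<eta>T / \<eta>L) powr (1 / \<alpha>T)) powr (1 / (\<alpha>L / \<alpha>T))"
      unfolding tauTL_def using pos that by (intro powr_thr) auto
    also have "(RB / (\<eta>T / \<eta>L) powr (1 / \<alpha>T)) powr (1 / (\<alpha>L / \<alpha>T)) = lLT"
      unfolding lLT_def using pos by (intro thr_eq) auto
    finally show ?thesis .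
  qed
  have NF1: "NF r = 1" if "0 < r" "r \<le> lLh" for r
  proof -
    have "tauNL r = h" using thrN[OF that] by (simp add: tauNL_def)
    then have a0: "aN r = 0" by (simp add: aN_def)
    show ?thesis unfolding NF_def IN_def a0 LINT_00 by simp
  qed
  have NFnn: "0 \<le> NF r" for r by (simp add: NF_def)
  have QTnn: "0 \<le> 1 - QT" by (simp add: QT1)
  show ?thesis
  proof (intro allI impI conjI)
    fix t assume t: "h \<le> t"
    define s where "s = sqrt (t^2 - h^2)"
    have "h^2 \<le> t^2" using t h0 by (intro power_mono) auto
    then have th: "0 \<le> t^2 - h^2" by simp
    have s0: "0 \<le> s" using th by (simp add: s_def)
    have ts: "sqrt (s^2 + h^2) = t" using th t h0 by (simp add: s_def)
    have phi_pos: "phi x > 0" for x using h0 by (simp add: phi_def add_nonneg_pos)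
    have phi_rng: "phi x \<in> {h..t}" if "x \<in> {0..s}" for x
    proof -
      have "x^2 \<le> s^2" using that by (intro power_mono) auto
      then have "sqrt (x^2 + h^2) \<le> sqrt (s^2 + h^2)" by simp
      moreover have "sqrt (h^2) \<le> sqrt (x^2 + h^2)" by (simp del: real_sqrt_abs)
      ultimately show ?thesis using ts h0 by (simp add: phi_def)
    qed
    have phi_inv: "sqrt ((phi x)^2 - h^2) = x" if "0 \<le> x" for x
      using that by (simp add: phi_def add_nonneg_nonneg)
    have r_rng: "sqrt (r^2 - h^2) \<in> {0..s}" if "r \<in> {h..t}" for r
    proof -
      have "h^2 \<le> r^2" "r^2 \<le> t^2" using that h0 by (auto intro: power_mono)
      then show ?thesis by (auto simp: s_def)
    qed
    have tauNL_ge: "h \<le> tauNL r" for r by (simp add: tauNL_def)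
    have tauNL_mono: "tauNL r \<le> tauNL t" if "r \<in> {h..t}" for r
    proof -
      have "r powr (\<alpha>L / \<alpha>N) \<le> t powr (\<alpha>L / \<alpha>N)" using that h0 pos by (intro powr_mono2) auto
      then have "(\<eta>N / \<eta>L) powr (1 / \<alpha>N) * r powr (\<alpha>L / \<alpha>N) \<le> (\<eta>N / \<eta>L) powr (1 / \<alpha>N) * t powr (\<alpha>L / \<alpha>N)"
        by (rule mult_left_mono) simp
      then show ?thesis unfolding tauNL_def by (intro max.mono) auto
    qed
    define BN where "BN = aN t"
    have aN_rng: "aN r \<in> {0..BN}" if "r \<in> {h..t}" for r
    proof -
      have "h^2 \<le> (tauNL r)^2" using tauNL_ge[of r] h0 by (intro power_mono) auto
      moreover have "(tauNL r)^2 \<le> (tauNL t)^2" using tauNL_mono[OF that] tauNL_ge[of r] h0 by (intro power_mono) auto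
      ultimately show ?thesis by (auto simp: aN_def BN_def)
    qed
    have BN0: "0 \<le> BN" using aN_rng[of t] t by auto
    have contIL: "continuous_on {0..s} IL"
      unfolding IL_def
    proof (rule intG_cont[OF _ s0, of _ s])
      fix x assume x: "x \<in> {0..s}"
      have "x * P_L x \<le> x * 1" using PL_range x by (intro mult_left_mono) auto
      then show "0 \<le> x * P_L x \<and> x * P_L x \<le> s" using PL_range x by auto
    qed measurable
    have contIN: "continuous_on {0..BN} IN"
      unfolding IN_def
    proof (rule intG_cont[OF _ BN0, of _ BN])
      fix x assume x: "x \<in> {0..BN}"
      have "x * (1 - P_L x) \<le> x * 1" using PL_range x by (intro mult_left_mono) auto
      then show "0 \<le> x * (1 - P_L x) \<and> x * (1 - P_L x) \<le> BN" using PL_range x by auto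
    qed measurable
    define ILc where "ILc u = IL (max 0 (min s u))" for u
    define INc where "INc u = IN (max 0 (min BN u))" for u
    have ILcm[measurable]: "ILc \<in> borel_measurable borel" unfolding ILc_def by (rule meas_clamp[OF contIL s0])
    have INcm[measurable]: "INc \<in> borel_measurable borel" unfolding INc_def by (rule meas_clamp[OF contIN BN0])
    have aNm[measurable]: "aN \<in> borel_measurable borel" unfolding aN_def tauNL_def by measurable
    have tauTLm[measurable]: "tauTL \<in> borel_measurable borel" unfolding tauTL_def by measurable
    define NFc where "NFc r = exp (- 2 * pi * lamA * INc (aN r))" for r
    have NFcm[measurable]: "NFc \<in> borel_measurable borel" unfolding NFc_def by measurable
    have NF_eq: "NF r = NFc r" if "r \<in> {h..t}" for r
      using aN_rng[OF that] by (simp add: NF_def NFc_def INc_def)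
    define fRc where "fRc r = 2 * pi * lamA * r * P_L (sqrt (r^2 - h^2)) * exp (- 2 * pi * lamA * ILc (sqrt (r^2 - h^2)))" for r
    have fRcm[measurable]: "fRc \<in> borel_measurable borel" unfolding fRc_def by measurable
    have fR_eq: "f_RL0 lamA h P_L r = fRc r" if "r \<in> {h..t}" for r
      using r_rng[OF that] by (simp add: fR fRc_def ILc_def)
    have fR_nn: "0 \<le> f_RL0 lamA h P_L r" if "r \<in> {h..t}" for r
    proof -
      have "0 \<le> P_L (sqrt (r^2 - h^2))" using PL_range r_rng[OF that] by auto
      then show ?thesis unfolding fR using that h0 lamA by auto
    qed
    have law: "density (distr M borel (X 1)) (indicator {0..s}) = density lborel (\<lambda>x. indicator {0..s} x * ennreal (gL x * exp (- GL x)))"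
      using law_zr[OF M ppL qLm qLb s0] unfolding X1 gL_def GL_def .
    have lawm: "(\<lambda>x. indicator {0..s} x * ennreal (gL x * exp (- GL x))) \<in> borel_measurable borel"
      using law_meas[OF qLm qLb s0] unfolding gL_def GL_def .
    have gLnn: "0 \<le> gL x * exp (- GL x)" if "x \<in> {0..s}" for x
      using qLb[of x] that by (auto simp: gL_def)
    have fphi: "f_RL0 lamA h P_L (phi x) * (x / phi x) = gL x * exp (- GL x)" if "x \<in> {0..s}" for x
    proof -
      have x0: "0 \<le> x" using that by auto
      have "f_RL0 lamA h P_L (phi x) * (x / phi x) = 2 * pi * lamA * phi x * P_L x * exp (- 2 * pi * lamA * IL x) * (x / phi x)"
        unfolding fR phi_inv[OF x0] ..
      also have "\<dots> = 2 * pi * lamA * x * P_L x * exp (- 2 * pi * lamA * IL x)"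
        using phi_pos[of x] by (simp add: field_simps)
      also have "\<dots> = gL x * exp (- GL x)"
        unfolding GL_eq gL_def qL_def by (simp add: algebra_simps)
      finally show ?thesis .
    qed
    have prodS: "{(x,(y,z)). x \<in> {0..s} \<and> y \<in> T x \<and> z \<in> UNIV - {0..<aN (phi x)}} \<in> sets (borel \<Otimes>\<^sub>M (borel \<Otimes>\<^sub>M borel))"
      if Tp: "Measurable.pred (borel \<Otimes>\<^sub>M borel) (\<lambda>(x,y). y \<in> T x)" for T
    proof -
      have phim[measurable]: "phi \<in> borel_measurable borel" unfolding phi_def by measurable
      note Tp[measurable]
      have P: "Measurable.pred (borel \<Otimes>\<^sub>M (borel \<Otimes>\<^sub>M borel)) (\<lambda>w. fst w \<in> {0..s} \<and> (\<lambda>(x,y). y \<in> T x) (fst w, fst (snd w)) \<and> \<not> (0 \<le> snd (snd w) \<and> snd (snd w) < aN (phi (fst w))))"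
        by measurable
      have E: "{w \<in> space (borel \<Otimes>\<^sub>M (borel \<Otimes>\<^sub>M borel)). fst w \<in> {0..s} \<and> (\<lambda>(x,y). y \<in> T x) (fst w, fst (snd w)) \<and> \<not> (0 \<le> snd (snd w) \<and> snd (snd w) < aN (phi (fst w)))}
          = {(x,(y,z)). x \<in> {0..s} \<and> y \<in> T x \<and> z \<in> UNIV - {0..<aN (phi x)}}"
        by (auto simp: space_pair_measure)
      show ?thesis using P unfolding pred_def E .
    qed
    show "measure M {\<omega> \<in> space M. dist3 h (\<Phi>L \<omega>) \<le> t
                \<and> \<not> (\<Phi>T \<omega> \<noteq> {} \<and> nearest (\<Phi>T \<omega>) \<le> RB)
                \<and> assoc_LoS h RB \<alpha>T \<alpha>L \<alpha>N \<eta>T \<eta>L \<eta>N (\<Phi>T \<omega>) (\<Phi>L \<omega>) (\<Phi>N \<omega>)}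
             = (LINT r:{h..t}|lborel. AL *
                  (if r \<le> lLh then f_RL0 lamA h P_L r / AL * (1 - QT)
                   else f_RL0 lamA h P_L r / AL * (1 - QT)
                        * exp (- 2 * pi * lamA *
                            (LINT x:{0..sqrt ((tauNL r)\<^sup>2 - h\<^sup>2)}|lborel. x * (1 - P_L x)))))"
    proof -
      define H1 where "H1 x = (1 - QT) * NF (phi x)" for x
      define F1 where "F1 r = f_RL0 lamA h P_L r * ((1 - QT) * NF r)" for r
      let ?T = "\<lambda>x::real. UNIV - {0..RB}"
      let ?U = "\<lambda>x. UNIV - {0..<aN (phi x)}"
      have pw: "(dist3 h (\<Phi>L \<omega>) \<le> t \<and> \<not> (\<Phi>T \<omega> \<noteq> {} \<and> nearest (\<Phi>T \<omega>) \<le> RB)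
                \<and> assoc_LoS h RB \<alpha>T \<alpha>L \<alpha>N \<eta>T \<eta>L \<eta>N (\<Phi>T \<omega>) (\<Phi>L \<omega>) (\<Phi>N \<omega>))
          \<longleftrightarrow> (X 1 \<omega> \<in> {0..s} \<and> X 0 \<omega> \<in> ?T (X 1 \<omega>) \<and> X 2 \<omega> \<in> ?U (X 1 \<omega>))" for \<omega>
        using ev1[OF h0 t pos(8,9,10,5,6,7), where SL="\<Phi>L \<omega>" and ST="\<Phi>T \<omega>" and SN="\<Phi>N \<omega>" and RB=RB]
        unfolding X0 X1 X2 s_def phi_def aN_def tauNL_eq by simp
      have Ev: "{\<omega> \<in> space M. dist3 h (\<Phi>L \<omega>) \<le> t
                \<and> \<not> (\<Phi>T \<omega> \<noteq> {} \<and> nearest (\<Phi>T \<omega>) \<le> RB)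
                \<and> assoc_LoS h RB \<alpha>T \<alpha>L \<alpha>N \<eta>T \<eta>L \<eta>N (\<Phi>T \<omega>) (\<Phi>L \<omega>) (\<Phi>N \<omega>)}
         = {\<omega>\<in>space M. X 1 \<omega> \<in> {0..s} \<and> X 0 \<omega> \<in> ?T (X 1 \<omega>) \<and> X 2 \<omega> \<in> ?U (X 1 \<omega>)}"
        by (intro Collect_cong conj_cong refl pw)
      have Tp: "Measurable.pred (borel \<Otimes>\<^sub>M borel) (\<lambda>(x::real,y::real). y \<in> ?T x)"
      proof -
        have "(\<lambda>(x::real,y::real). y \<in> ?T x) = (\<lambda>w. \<not> (0 \<le> snd w \<and> snd w \<le> RB))" by auto
        then show ?thesis by simp
      qed
      have e1: "emeasure M {\<omega>\<in>space M. X 1 \<omega> \<in> {0..s} \<and> X 0 \<omega> \<in> ?T (X 1 \<omega>) \<and> X 2 \<omega> \<in> ?U (X 1 \<omega>)}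
          = (\<integral>\<^sup>+ x. indicator {0..s} x * ennreal (gL x * exp (- GL x)) * ennreal (H1 x) \<partial>lborel)"
      proof (rule probA[OF M ind law lawm prodS[OF Tp]])
        show "?T x \<in> sets borel" "?U x \<in> sets borel" for x by auto
        fix x assume x: "x \<in> {0..s}"
        show "emeasure M {\<omega>\<in>space M. X 0 \<omega> \<in> ?T x} * emeasure M {\<omega>\<in>space M. X 2 \<omega> \<in> ?U x} = ennreal (H1 x)"
          unfolding TF1 NFv H1_def using QTnn NFnn by (simp add: ennreal_mult)
      next
        have "(\<lambda>x. indicator {0..s} x * ennreal (H1 x)) = (\<lambda>x. indicator {0..s} x * ennreal ((1 - QT) * NFc (phi x)))"
          using NF_eq phi_rng by (auto simp: H1_def split: split_indicator)
        moreover have "phi \<in> borel_measurable borel" unfolding phi_def by measurable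
        ultimately show "(\<lambda>x. indicator {0..s} x * ennreal (H1 x)) \<in> borel_measurable borel" by simp
      qed
      have e2: "(\<integral>\<^sup>+ x. indicator {0..s} x * ennreal (gL x * exp (- GL x)) * ennreal (H1 x) \<partial>lborel)
          = (\<integral>\<^sup>+ r. ennreal (F1 r * indicator {h..sqrt (s^2 + h^2)} r) \<partial>lborel)"
      proof (rule substB[OF h0 s0])
        have "(\<lambda>r. indicator {h..t} r *\<^sub>R F1 r) = (\<lambda>r. indicator {h..t} r *\<^sub>R (fRc r * ((1 - QT) * NFc r)))"
          using NF_eq fR_eq by (auto simp: F1_def split: split_indicator)
        then show "set_borel_measurable borel {h..sqrt (s^2 + h^2)} F1"
          unfolding ts set_borel_measurable_def by simp
        fix x assume x: "x \<in> {0..s}"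
        show "F1 (sqrt (x^2+h^2)) * (x / sqrt (x^2+h^2)) = gL x * exp (- GL x) * H1 x"
          using fphi[OF x] unfolding F1_def H1_def phi_def[symmetric] by (simp add: ac_simps)
        show "0 \<le> gL x * exp (- GL x) \<and> 0 \<le> H1 x"
          using gLnn[OF x] QTnn NFnn by (simp add: H1_def)
      qed
      show ?thesis
      proof (rule measure_LINT[where F=F1])
        show "emeasure M {\<omega> \<in> space M. dist3 h (\<Phi>L \<omega>) \<le> t
                \<and> \<not> (\<Phi>T \<omega> \<noteq> {} \<and> nearest (\<Phi>T \<omega>) \<le> RB)
                \<and> assoc_LoS h RB \<alpha>T \<alpha>L \<alpha>N \<eta>T \<eta>L \<eta>N (\<Phi>T \<omega>) (\<Phi>L \<omega>) (\<Phi>N \<omega>)}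
          = (\<integral>\<^sup>+ r. ennreal (F1 r * indicator {h..t} r) \<partial>lborel)"
          unfolding Ev e1 e2 ts ..
        fix r assume r: "r \<in> {h..t}"
        have r0: "0 < r" using r h0 by auto
        show "AL * (if r \<le> lLh then f_RL0 lamA h P_L r / AL * (1 - QT)
                   else f_RL0 lamA h P_L r / AL * (1 - QT)
                        * exp (- 2 * pi * lamA *
                            (LINT x:{0..sqrt ((tauNL r)\<^sup>2 - h\<^sup>2)}|lborel. x * (1 - P_L x)))) = F1 r"
          using NF1[OF r0] AL0 unfolding F1_def by (auto simp: NF_def aN_def IN_def field_simps)
        show "0 \<le> F1 r" unfolding F1_def using fR_nn[OF r] QTnn NFnn by simp
      next
        have "(\<lambda>r. indicator {h..t} r *\<^sub>R (AL * (if r \<le> lLh then f_RL0 lamA h P_L r / AL * (1 - QT)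
                   else f_RL0 lamA h P_L r / AL * (1 - QT)
                        * exp (- 2 * pi * lamA *
                            (LINT x:{0..sqrt ((tauNL r)\<^sup>2 - h\<^sup>2)}|lborel. x * (1 - P_L x))))))
            = (\<lambda>r. indicator {h..t} r *\<^sub>R (fRc r * ((1 - QT) * NFc r)))"
        proof (intro ext)
          fix r show "indicator {h..t} r *\<^sub>R (AL * (if r \<le> lLh then f_RL0 lamA h P_L r / AL * (1 - QT)
                   else f_RL0 lamA h P_L r / AL * (1 - QT)
                        * exp (- 2 * pi * lamA *
                            (LINT x:{0..sqrt ((tauNL r)\<^sup>2 - h\<^sup>2)}|lborel. x * (1 - P_L x)))))
            = indicator {h..t} r *\<^sub>R (fRc r * ((1 - QT) * NFc r))"
          proof (cases "r \<in> {h..t}")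
            case True
            have r0: "0 < r" using True h0 by auto
            show ?thesis using True NF1[OF r0] AL0 NF_eq[OF True] fR_eq[OF True]
              by (auto simp: NF_def aN_def IN_def field_simps)
          qed simp
        qed
        then show "(\<lambda>r. indicator {h..t} r *\<^sub>R (AL * (if r \<le> lLh then f_RL0 lamA h P_L r / AL * (1 - QT)
                   else f_RL0 lamA h P_L r / AL * (1 - QT)
                        * exp (- 2 * pi * lamA *
                            (LINT x:{0..sqrt ((tauNL r)\<^sup>2 - h\<^sup>2)}|lborel. x * (1 - P_L x))))))
            \<in> borel_measurable borel" by simp
      qed
    qed
    show "measure M {\<omega> \<in> space M. dist3 h (\<Phi>L \<omega>) \<le> t
                \<and> (\<Phi>T \<omega> \<noteq> {} \<and> nearest (\<Phi>T \<omega>) \<le> RB)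
                \<and> assoc_LoS h RB \<alpha>T \<alpha>L \<alpha>N \<eta>T \<eta>L \<eta>N (\<Phi>T \<omega>) (\<Phi>L \<omega>) (\<Phi>N \<omega>)}
             = (LINT r:{h..t}|lborel. AL *
                  (if r > lLT then 0
                   else if lLh > lLT \<or> r \<le> lLh
                     then f_RL0 lamA h P_L r / AL * (exp (- pi * lamT * (tauTL r)\<^sup>2) - (1 - QT))
                   else f_RL0 lamA h P_L r / AL * (exp (- pi * lamT * (tauTL r)\<^sup>2) - (1 - QT))
                        * exp (- 2 * pi * lamA *
                            (LINT x:{0..sqrt ((tauNL r)\<^sup>2 - h\<^sup>2)}|lborel. x * (1 - P_L x)))))"
    proof -
      define TF where "TF r = (if tauTL r \<le> RB then exp (- pi * lamT * (tauTL r)^2) - (1 - QT) else 0)" for r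
      define H2 where "H2 x = TF (phi x) * NF (phi x)" for x
      define F2 where "F2 r = f_RL0 lamA h P_L r * (TF r * NF r)" for r
      have TFm[measurable]: "TF \<in> borel_measurable borel" unfolding TF_def by measurable
      have phim[measurable]: "phi \<in> borel_measurable borel" unfolding phi_def by measurable
      have TFnn: "0 \<le> TF r" for r
      proof (cases "tauTL r \<le> RB")
        case True
        have "pi * lamT * (tauTL r)^2 \<le> pi * lamT * RB^2"
        proof -
          have "0 \<le> tauTL r" unfolding tauTL_def by simp
          then have "(tauTL r)^2 \<le> RB^2" using True by (intro power_mono) auto
          then show ?thesis using lamT by (simp add: mult_left_mono)
        qed
        then show ?thesis using True by (simp add: TF_def QT1)
      qed (simp add: TF_def)
      let ?T = "\<lambda>x::real. {tauTL (phi x)..RB}"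
      let ?U = "\<lambda>x. UNIV - {0..<aN (phi x)}"
      let ?A = "{\<omega>\<in>space M. X 1 \<omega> \<in> {0..s} \<and> X 0 \<omega> \<in> ?T (X 1 \<omega>) \<and> X 2 \<omega> \<in> ?U (X 1 \<omega>)}"
      let ?B = "{\<omega>\<in>space M. X 0 \<omega> = 0 \<and> X 1 \<omega> \<in> {0..s} \<and> X 2 \<omega> \<in> ?U (X 1 \<omega>)}"
      have pw: "(dist3 h (\<Phi>L \<omega>) \<le> t \<and> (\<Phi>T \<omega> \<noteq> {} \<and> nearest (\<Phi>T \<omega>) \<le> RB)
                \<and> assoc_LoS h RB \<alpha>T \<alpha>L \<alpha>N \<eta>T \<eta>L \<eta>N (\<Phi>T \<omega>) (\<Phi>L \<omega>) (\<Phi>N \<omega>))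
          \<longleftrightarrow> ((X 1 \<omega> \<in> {0..s} \<and> X 0 \<omega> \<in> ?T (X 1 \<omega>) \<and> X 2 \<omega> \<in> ?U (X 1 \<omega>))
              \<or> (X 0 \<omega> = 0 \<and> X 1 \<omega> \<in> {0..s} \<and> X 2 \<omega> \<in> ?U (X 1 \<omega>)))" for \<omega>
        using ev2[OF RB0 h0 t pos(8,9,10,5,6,7), where SL="\<Phi>L \<omega>" and ST="\<Phi>T \<omega>" and SN="\<Phi>N \<omega>"]
        unfolding X0 X1 X2 s_def phi_def aN_def tauNL_eq tauTL_def by simp
      have Ev: "{\<omega> \<in> space M. dist3 h (\<Phi>L \<omega>) \<le> t
                \<and> (\<Phi>T \<omega> \<noteq> {} \<and> nearest (\<Phi>T \<omega>) \<le> RB)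
                \<and> assoc_LoS h RB \<alpha>T \<alpha>L \<alpha>N \<eta>T \<eta>L \<eta>N (\<Phi>T \<omega>) (\<Phi>L \<omega>) (\<Phi>N \<omega>)} = ?A \<union> ?B"
        using pw by auto
      have Am: "?A \<in> sets M"
      proof -
        have "Measurable.pred M (\<lambda>\<omega>. X 1 \<omega> \<in> {0..s} \<and> tauTL (phi (X 1 \<omega>)) \<le> X 0 \<omega> \<and> X 0 \<omega> \<le> RB \<and> \<not> (0 \<le> X 2 \<omega> \<and> X 2 \<omega> < aN (phi (X 1 \<omega>))))"
          by measurable
        moreover have "{\<omega>\<in>space M. X 1 \<omega> \<in> {0..s} \<and> tauTL (phi (X 1 \<omega>)) \<le> X 0 \<omega> \<and> X 0 \<omega> \<le> RB \<and> \<not> (0 \<le> X 2 \<omega> \<and> X 2 \<omega> < aN (phi (X 1 \<omega>)))} = ?A"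
          by auto
        ultimately show ?thesis unfolding pred_def by simp
      qed
      have Bm: "?B \<in> sets M"
      proof -
        have "Measurable.pred M (\<lambda>\<omega>. X 0 \<omega> = 0 \<and> X 1 \<omega> \<in> {0..s} \<and> \<not> (0 \<le> X 2 \<omega> \<and> X 2 \<omega> < aN (phi (X 1 \<omega>))))"
          by measurable
        moreover have "{\<omega>\<in>space M. X 0 \<omega> = 0 \<and> X 1 \<omega> \<in> {0..s} \<and> \<not> (0 \<le> X 2 \<omega> \<and> X 2 \<omega> < aN (phi (X 1 \<omega>)))} = ?B"
          by auto
        ultimately show ?thesis unfolding pred_def by simp
      qed
      have N0: "{\<omega>\<in>space M. X 0 \<omega> \<in> {0..0}} \<in> null_sets M"
      proof -
        have "emeasure M {\<omega>\<in>space M. X 0 \<omega> \<in> {0..0}} = 0"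
          using prob_zr_Icc[OF M ppT qTm order_refl[of 0]] unfolding X0 LINT_00 by simp
        moreover have "{\<omega>\<in>space M. X 0 \<omega> \<in> {0..0}} \<in> sets M" by measurable
        ultimately show ?thesis by (simp add: null_sets_def)
      qed
      have Bnull: "?B \<in> null_sets M"
        by (rule null_sets_subset[OF N0 Bm]) auto
      have Tp: "Measurable.pred (borel \<Otimes>\<^sub>M borel) (\<lambda>(x::real,y::real). y \<in> ?T x)"
      proof -
        have "(\<lambda>(x::real,y::real). y \<in> ?T x) = (\<lambda>w. tauTL (phi (fst w)) \<le> snd w \<and> snd w \<le> RB)" by auto
        moreover have "Measurable.pred (borel \<Otimes>\<^sub>M borel) (\<lambda>w::real\<times>real. tauTL (phi (fst w)) \<le> snd w \<and> snd w \<le> RB)"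
          by measurable
        ultimately show ?thesis by simp
      qed
      have e1: "emeasure M ?A = (\<integral>\<^sup>+ x. indicator {0..s} x * ennreal (gL x * exp (- GL x)) * ennreal (H2 x) \<partial>lborel)"
      proof (rule probA[OF M ind law lawm prodS[OF Tp]])
        show "?T x \<in> sets borel" "?U x \<in> sets borel" for x by auto
        fix x assume x: "x \<in> {0..s}"
        have tp: "0 < tauTL (phi x)" unfolding tauTL_def using pos phi_pos[of x] by simp
        show "emeasure M {\<omega>\<in>space M. X 0 \<omega> \<in> ?T x} * emeasure M {\<omega>\<in>space M. X 2 \<omega> \<in> ?U x} = ennreal (H2 x)"
          unfolding TF2[OF tp] NFv H2_def using TFnn NFnn by (simp add: ennreal_mult TF_def)
      next
        have "(\<lambda>x. indicator {0..s} x * ennreal (H2 x)) = (\<lambda>x. indicator {0..s} x * ennreal (TF (phi x) * NFc (phi x)))"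
          using NF_eq phi_rng by (auto simp: H2_def split: split_indicator)
        then show "(\<lambda>x. indicator {0..s} x * ennreal (H2 x)) \<in> borel_measurable borel" by simp
      qed
      have e2: "(\<integral>\<^sup>+ x. indicator {0..s} x * ennreal (gL x * exp (- GL x)) * ennreal (H2 x) \<partial>lborel)
          = (\<integral>\<^sup>+ r. ennreal (F2 r * indicator {h..sqrt (s^2 + h^2)} r) \<partial>lborel)"
      proof (rule substB[OF h0 s0])
        have "(\<lambda>r. indicator {h..t} r *\<^sub>R F2 r) = (\<lambda>r. indicator {h..t} r *\<^sub>R (fRc r * (TF r * NFc r)))"
          using NF_eq fR_eq by (auto simp: F2_def split: split_indicator)
        then show "set_borel_measurable borel {h..sqrt (s^2 + h^2)} F2"
          unfolding ts set_borel_measurable_def by simp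
        fix x assume x: "x \<in> {0..s}"
        show "F2 (sqrt (x^2+h^2)) * (x / sqrt (x^2+h^2)) = gL x * exp (- GL x) * H2 x"
          using fphi[OF x] unfolding F2_def H2_def phi_def[symmetric] by (simp add: ac_simps)
        show "0 \<le> gL x * exp (- GL x) \<and> 0 \<le> H2 x"
          using gLnn[OF x] TFnn NFnn by (simp add: H2_def)
      qed
      have SF: "AL * (if r > lLT then 0
                   else if lLh > lLT \<or> r \<le> lLh
                     then f_RL0 lamA h P_L r / AL * (exp (- pi * lamT * (tauTL r)\<^sup>2) - (1 - QT))
                   else f_RL0 lamA h P_L r / AL * (exp (- pi * lamT * (tauTL r)\<^sup>2) - (1 - QT))
                        * exp (- 2 * pi * lamA *
                            (LINT x:{0..sqrt ((tauNL r)\<^sup>2 - h\<^sup>2)}|lborel. x * (1 - P_L x)))) = F2 r"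
        if r: "r \<in> {h..t}" for r
      proof -
        have r0: "0 < r" using r h0 by auto
        show ?thesis
        proof (cases "r > lLT")
          case True
          then have "TF r = 0" using thrT[OF r0] by (simp add: TF_def)
          then show ?thesis using True by (simp add: F2_def)
        next
          case False
          then have TFe: "TF r = exp (- pi * lamT * (tauTL r)^2) - (1 - QT)" using thrT[OF r0] by (simp add: TF_def)
          show ?thesis
          proof (cases "lLh > lLT \<or> r \<le> lLh")
            case True
            then have "r \<le> lLh" using False by auto
            then have "NF r = 1" by (rule NF1[OF r0])
            then show ?thesis using True False TFe AL0 by (simp add: F2_def)
          next
            case c2: False
            then show ?thesis using False TFe AL0 by (simp add: F2_def NF_def aN_def IN_def)
          qed
        qed
      qed
      have F2nn: "0 \<le> F2 r" if "r \<in> {h..t}" for r unfolding F2_def using fR_nn[OF that] TFnn NFnn by simp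
      show ?thesis
      proof (rule measure_LINT[where F=F2])
        have "emeasure M (?A \<union> ?B) = emeasure M ?A" by (rule emeasure_Un_null_set[OF Am Bnull])
        then show "emeasure M {\<omega> \<in> space M. dist3 h (\<Phi>L \<omega>) \<le> t
                \<and> (\<Phi>T \<omega> \<noteq> {} \<and> nearest (\<Phi>T \<omega>) \<le> RB)
                \<and> assoc_LoS h RB \<alpha>T \<alpha>L \<alpha>N \<eta>T \<eta>L \<eta>N (\<Phi>T \<omega>) (\<Phi>L \<omega>) (\<Phi>N \<omega>)}
          = (\<integral>\<^sup>+ r. ennreal (F2 r * indicator {h..t} r) \<partial>lborel)"
          unfolding Ev e1 e2 ts .
        fix r assume r: "r \<in> {h..t}"
        show "AL * (if r > lLT then 0
                   else if lLh > lLT \<or> r \<le> lLh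
                     then f_RL0 lamA h P_L r / AL * (exp (- pi * lamT * (tauTL r)\<^sup>2) - (1 - QT))
                   else f_RL0 lamA h P_L r / AL * (exp (- pi * lamT * (tauTL r)\<^sup>2) - (1 - QT))
                        * exp (- 2 * pi * lamA *
                            (LINT x:{0..sqrt ((tauNL r)\<^sup>2 - h\<^sup>2)}|lborel. x * (1 - P_L x)))) = F2 r"
          by (rule SF[OF r])
        show "0 \<le> F2 r" by (rule F2nn[OF r])
      next
        have "(\<lambda>r. indicator {h..t} r *\<^sub>R (AL * (if r > lLT then 0
                   else if lLh > lLT \<or> r \<le> lLh
                     then f_RL0 lamA h P_L r / AL * (exp (- pi * lamT * (tauTL r)\<^sup>2) - (1 - QT))
                   else f_RL0 lamA h P_L r / AL * (exp (- pi * lamT * (tauTL r)\<^sup>2) - (1 - QT))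
                        * exp (- 2 * pi * lamA *
                            (LINT x:{0..sqrt ((tauNL r)\<^sup>2 - h\<^sup>2)}|lborel. x * (1 - P_L x))))))
            = (\<lambda>r. indicator {h..t} r *\<^sub>R (fRc r * (TF r * NFc r)))"
        proof (intro ext)
          fix r show "indicator {h..t} r *\<^sub>R (AL * (if r > lLT then 0
                   else if lLh > lLT \<or> r \<le> lLh
                     then f_RL0 lamA h P_L r / AL * (exp (- pi * lamT * (tauTL r)\<^sup>2) - (1 - QT))
                   else f_RL0 lamA h P_L r / AL * (exp (- pi * lamT * (tauTL r)\<^sup>2) - (1 - QT))
                        * exp (- 2 * pi * lamA *
                            (LINT x:{0..sqrt ((tauNL r)\<^sup>2 - h\<^sup>2)}|lborel. x * (1 - P_L x)))))
            = indicator {h..t} r *\<^sub>R (fRc r * (TF r * NFc r))"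
          proof (cases "r \<in> {h..t}")
            case True
            show ?thesis using SF[OF True] NF_eq[OF True] fR_eq[OF True] True by (simp add: F2_def)
          qed simp
        qed
        then show "(\<lambda>r. indicator {h..t} r *\<^sub>R (AL * (if r > lLT then 0
                   else if lLh > lLT \<or> r \<le> lLh
                     then f_RL0 lamA h P_L r / AL * (exp (- pi * lamT * (tauTL r)\<^sup>2) - (1 - QT))
                   else f_RL0 lamA h P_L r / AL * (exp (- pi * lamT * (tauTL r)\<^sup>2) - (1 - QT))
                        * exp (- 2 * pi * lamA *
                            (LINT x:{0..sqrt ((tauNL r)\<^sup>2 - h\<^sup>2)}|lborel. x * (1 - P_L x))))))
            \<in> borel_measurable borel" by simp
      qed
    qed
  qed
qed


end
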